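(* Let $k\ge 4$ and let $p,p'$ be two POPs of size $k$ having the same set $I$ of isolated vertices, such that $k-1\in I$ and $k-3,k-2,k\notin I$. Suppose that in both $p$ and $p'$, each of the labels $k-2$ and $k$ is greater than every label $x\in[k-3]\setminus I$. Suppose that the subposets of $p$ and $p'$ induced by $[k-3]\setminus I$ coincide, and that $k<_p k-2$ while $k-2<_{p'}k$. Then $p\sim p'$.
   Context: A partially ordered pattern (POP) $p$ of size $k$ is a partial order $\le_p$ on $[k]=\{1,\dots,k\}$. A permutation $\pi=\pi_1\cdots\pi_n$ contains $p$ if there are indices $i_1<\dots<i_k$ with $\pi_{i_j}<\pi_{i_m}$ whenever $j<_p m$; otherwise it avoids $p$. $\mathfrak S_n(p)$ is the set of permutations of $[n]$ avoiding $p$, and $p\sim q$ (Wilf-equivalence) means $|\mathfrak S_n(p)|=|\mathfrak S_n(q)|$ for all $n\ge 1$. A vertex is isolated if it is comparable to no other vertex. *)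

theory Defs
  imports Main "HOL-Combinatorics.Permutations"
begin

definition pop :: "nat \<Rightarrow> (nat \<times> nat) set \<Rightarrow> bool" where
  "pop k r \<longleftrightarrow> partial_order_on {1..k} r \<and> r \<subseteq> {1..k} \<times> {1..k}"

definition pop_less :: "(nat \<times> nat) set \<Rightarrow> nat \<Rightarrow> nat \<Rightarrow> bool" where
  "pop_less r j m \<longleftrightarrow> (j, m) \<in> r \<and> j \<noteq> m"

definition isolated :: "nat \<Rightarrow> (nat \<times> nat) set \<Rightarrow> nat set" where
  "isolated k r = {v \<in> {1..k}. \<forall>u\<in>{1..k}. u \<noteq> v \<longrightarrow> \<not> pop_less r u v \<and> \<not> pop_less r v u}"

text \<open>A permutation of [n] is a bijection pi of {1..n}; pi i is the entry at position i.\<close>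
definition contains :: "(nat \<Rightarrow> nat) \<Rightarrow> nat \<Rightarrow> nat \<Rightarrow> (nat \<times> nat) set \<Rightarrow> bool" where
  "contains \<pi> n k r \<longleftrightarrow> (\<exists>idx :: nat \<Rightarrow> nat.
     strict_mono_on {1..k} idx \<and> idx ` {1..k} \<subseteq> {1..n} \<and>
     (\<forall>j\<in>{1..k}. \<forall>m\<in>{1..k}. pop_less r j m \<longrightarrow> \<pi> (idx j) < \<pi> (idx m)))"

definition avoiders :: "nat \<Rightarrow> nat \<Rightarrow> (nat \<times> nat) set \<Rightarrow> (nat \<Rightarrow> nat) set" where
  "avoiders n k r = {\<pi>. \<pi> permutes {1..n} \<and> \<not> contains \<pi> n k r}"

definition wilf_equiv :: "nat \<Rightarrow> (nat \<times> nat) set \<Rightarrow> (nat \<times> nat) set \<Rightarrow> bool" where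
  "wilf_equiv k r r' \<longleftrightarrow> (\<forall>n\<ge>1. card (avoiders n k r) = card (avoiders n k r'))"

end

theory Submission
  imports Defs
begin

definition board :: "nat set \<Rightarrow> nat set \<Rightarrow> (nat \<Rightarrow> nat \<Rightarrow> bool) \<Rightarrow> (nat \<Rightarrow> nat) set" where
  "board X Y g = {\<sigma>. \<sigma> \<in> X \<rightarrow>\<^sub>E Y \<and> bij_betw \<sigma> X Y \<and> (\<forall>x\<in>X. g x (\<sigma> x))}"

definition badA :: "nat set \<Rightarrow> (nat \<Rightarrow> nat \<Rightarrow> bool) \<Rightarrow> (nat \<Rightarrow> nat) \<Rightarrow> bool" where
  "badA X g \<sigma> \<longleftrightarrow> (\<exists>j\<in>X. \<exists>l\<in>X. j + 2 \<le> l \<and> \<sigma> l < \<sigma> j \<and> g j (\<sigma> l))"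

definition badB :: "nat set \<Rightarrow> (nat \<Rightarrow> nat \<Rightarrow> bool) \<Rightarrow> (nat \<Rightarrow> nat) \<Rightarrow> bool" where
  "badB X g \<sigma> \<longleftrightarrow> (\<exists>j\<in>X. \<exists>l\<in>X. j + 2 \<le> l \<and> \<sigma> j < \<sigma> l \<and> g j (\<sigma> j))"

lemma card_fix:
  assumes "x \<in> X" "v \<in> Y" "g x v"
  shows "card {\<sigma>\<in>board X Y g. \<sigma> x = v \<and> Q \<sigma>} =
         card {\<tau>\<in>board (X-{x}) (Y-{v}) g. Q (\<tau>(x:=v))}"
proof -
  have inj: "inj_on (\<lambda>\<tau>. \<tau>(x:=v)) {\<tau>\<in>board (X-{x}) (Y-{v}) g. Q (\<tau>(x:=v))}"
  proof (rule inj_onI)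
    fix \<tau> \<tau>' assume a: "\<tau> \<in> {\<tau>\<in>board (X-{x}) (Y-{v}) g. Q (\<tau>(x:=v))}"
      "\<tau>' \<in> {\<tau>\<in>board (X-{x}) (Y-{v}) g. Q (\<tau>(x:=v))}" "\<tau>(x:=v) = \<tau>'(x:=v)"
    then have "\<tau> x = undefined" "\<tau>' x = undefined" by (auto simp: board_def PiE_def extensional_def)
    with a(3) show "\<tau> = \<tau>'" by (metis fun_upd_triv fun_upd_upd)
  qed
  have img: "(\<lambda>\<tau>. \<tau>(x:=v)) ` {\<tau>\<in>board (X-{x}) (Y-{v}) g. Q (\<tau>(x:=v))} = {\<sigma>\<in>board X Y g. \<sigma> x = v \<and> Q \<sigma>}"
  proof (intro equalityI subsetI)
    fix \<sigma> assume "\<sigma> \<in> (\<lambda>\<tau>. \<tau>(x:=v)) ` {\<tau>\<in>board (X-{x}) (Y-{v}) g. Q (\<tau>(x:=v))}"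
    then obtain \<tau> where t: "\<tau> \<in> board (X-{x}) (Y-{v}) g" "Q (\<tau>(x:=v))" "\<sigma> = \<tau>(x:=v)" by auto
    have b: "bij_betw \<tau> (X-{x}) (Y-{v})" using t(1) by (simp add: board_def)
    have "bij_betw \<sigma> (X-{x}) (Y-{v}) = bij_betw \<tau> (X-{x}) (Y-{v})" by (rule bij_betw_cong) (simp add: t(3))
    with b have "bij_betw \<sigma> (X-{x}) (Y-{v})" by simp
    moreover have "bij_betw \<sigma> {x} {v}" using t(3) by auto
    ultimately have "bij_betw \<sigma> ((X-{x}) \<union> {x}) ((Y-{v}) \<union> {v})"
      by (rule bij_betw_combine) auto
    then have "bij_betw \<sigma> X Y" using assms by (simp add: insert_absorb)
    moreover have "\<sigma> \<in> X \<rightarrow>\<^sub>E Y" using t(1,3) assms by (auto simp: board_def PiE_def extensional_def)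
    moreover have "\<forall>y\<in>X. g y (\<sigma> y)" using t(1,3) assms by (auto simp: board_def)
    ultimately show "\<sigma> \<in> {\<sigma>\<in>board X Y g. \<sigma> x = v \<and> Q \<sigma>}" using t by (auto simp: board_def)
  next
    fix \<sigma> assume s: "\<sigma> \<in> {\<sigma>\<in>board X Y g. \<sigma> x = v \<and> Q \<sigma>}"
    define \<tau> where "\<tau> = \<sigma>(x:=undefined)"
    have b: "bij_betw \<sigma> X Y" using s by (simp add: board_def)
    have "bij_betw \<sigma> (X-{x}) (Y-{v})"
      by (rule bij_betw_DiffI[OF b]) (use s assms in auto)
    moreover have "bij_betw \<sigma> (X-{x}) (Y-{v}) = bij_betw \<tau> (X-{x}) (Y-{v})" by (rule bij_betw_cong) (simp add: \<tau>_def)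
    ultimately have "bij_betw \<tau> (X-{x}) (Y-{v})" by simp
    moreover have "\<tau> \<in> (X-{x}) \<rightarrow>\<^sub>E (Y-{v})"
    proof -
      have "\<sigma> \<in> X \<rightarrow>\<^sub>E Y" using s by (simp add: board_def)
      moreover have "\<sigma> y \<noteq> v" if "y \<in> X - {x}" for y
        using b s that assms(1) unfolding bij_betw_def inj_on_def by force
      ultimately show ?thesis unfolding \<tau>_def by (auto simp: PiE_def extensional_def)
    qed
    moreover have "\<forall>y\<in>X-{x}. g y (\<tau> y)" using s by (auto simp: board_def \<tau>_def)
    moreover have "\<tau>(x:=v) = \<sigma>" using s by (auto simp: \<tau>_def)
    ultimately show "\<sigma> \<in> (\<lambda>\<tau>. \<tau>(x:=v)) ` {\<tau>\<in>board (X-{x}) (Y-{v}) g. Q (\<tau>(x:=v))}"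
      using s by (auto simp: board_def intro!: image_eqI[where x=\<tau>])
  qed
  show ?thesis using card_image[OF inj] img by simp
qed

lemma board_fin: "finite X \<Longrightarrow> finite Y \<Longrightarrow> finite (board X Y g)"
  by (rule finite_subset[of _ "X \<rightarrow>\<^sub>E Y"]) (auto simp: board_def finite_PiE)

lemma board_D:
  assumes "\<sigma> \<in> board X Y g"
  shows "\<sigma> \<in> X \<rightarrow>\<^sub>E Y" "bij_betw \<sigma> X Y" "\<And>x. x \<in> X \<Longrightarrow> g x (\<sigma> x)"
    "\<And>x. x \<in> X \<Longrightarrow> \<sigma> x \<in> Y" "\<And>y. y \<in> Y \<Longrightarrow> \<exists>x\<in>X. \<sigma> x = y"
    "\<And>x x'. x \<in> X \<Longrightarrow> x' \<in> X \<Longrightarrow> \<sigma> x = \<sigma> x' \<Longrightarrow> x = x'"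
  using assms by (auto simp: board_def bij_betw_def inj_on_def)

lemma A_split1:
  assumes fin: "finite X" "finite Y" and ne: "X \<noteq> {}" and x1: "x1 = Min X"
    and Y1: "Y1 = {y\<in>Y. g x1 y}" "Y1 \<noteq> {}" and m1: "m1 = Min Y1"
    and t: "\<tau> \<in> board (X-{x1}) (Y-{m1}) g"
  shows "badA X g (\<tau>(x1:=m1)) \<longleftrightarrow> badA (X-{x1}) g \<tau>"
proof
  assume "badA X g (\<tau>(x1:=m1))"
  then obtain j l where jl: "j\<in>X" "l\<in>X" "j+2 \<le> l" "(\<tau>(x1:=m1)) l < (\<tau>(x1:=m1)) j" "g j ((\<tau>(x1:=m1)) l)"
    unfolding badA_def by blast
  have "x1 \<le> j" using jl(1) x1 fin by simp
  then have lx: "l \<noteq> x1" using jl(3) by simp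
  show "badA (X-{x1}) g \<tau>"
  proof (cases "j = x1")
    case True
    have "\<tau> l \<in> Y - {m1}" using board_D(4)[OF t] jl(2) lx by simp
    then have "\<tau> l \<in> Y1" using jl(5) True lx Y1 by auto
    then have "m1 \<le> \<tau> l" using m1 Y1 fin by simp
    then show ?thesis using jl(4) True lx by simp
  next
    case False
    then show ?thesis using jl lx unfolding badA_def by (intro bexI[of _ j] bexI[of _ l]) auto
  qed
next
  assume "badA (X-{x1}) g \<tau>"
  then obtain j l where jl: "j\<in>X-{x1}" "l\<in>X-{x1}" "j+2 \<le> l" "\<tau> l < \<tau> j" "g j (\<tau> l)"
    unfolding badA_def by blast
  then show "badA X g (\<tau>(x1:=m1))" unfolding badA_def
    by (intro bexI[of _ j] bexI[of _ l]) auto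
qed

lemma A_struct:
  assumes fin: "finite X" "finite Y" and ne: "X \<noteq> {}" and x1: "x1 = Min X"
    and Y1: "Y1 = {y\<in>Y. g x1 y}" "Y1 \<noteq> {}" and m1: "m1 = Min Y1"
    and s: "\<sigma> \<in> board X Y g" "\<not> badA X g \<sigma>" "\<sigma> x1 \<noteq> m1"
  shows "Suc x1 \<in> X \<and> \<sigma> (Suc x1) = m1 \<and> \<sigma> x1 = Min (Y1 - {m1}) \<and> 2 \<le> card Y1"
proof -
  have x1X: "x1 \<in> X" using x1 fin ne by simp
  have fY1: "finite Y1" using Y1 fin by simp
  have m1Y1: "m1 \<in> Y1" unfolding m1 by (rule Min_in[OF fY1 Y1(2)])
  have s1: "\<sigma> x1 \<in> Y1" using board_D(3,4)[OF s(1) x1X] Y1 by simp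
  have lt: "m1 < \<sigma> x1" using s1 s(3) m1 fY1 by (simp add: order_le_neq_trans)
  obtain l where l: "l \<in> X" "\<sigma> l = m1" using board_D(5)[OF s(1)] m1Y1 Y1 by auto
  have "l \<noteq> x1" using l s(3) by auto
  moreover have "x1 \<le> l" using l x1 fin by simp
  moreover have "\<not> (x1 + 2 \<le> l)"
  proof
    assume "x1 + 2 \<le> l"
    then have "badA X g \<sigma>" unfolding badA_def using x1X l lt m1Y1 Y1
      by (intro bexI[of _ x1] bexI[of _ l]) auto
    then show False using s(2) by simp
  qed
  ultimately have lS: "l = Suc x1" by simp
  have ne2: "Y1 - {m1} \<noteq> {}" using s1 s(3) by auto
  define m2 where "m2 = Min (Y1 - {m1})"
  have m2in: "m2 \<in> Y1 - {m1}" unfolding m2_def using ne2 fY1 by (intro Min_in) auto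
  have "m2 \<le> \<sigma> x1" using s1 s(3) fY1 m2_def by simp
  moreover have "\<not> m2 < \<sigma> x1"
  proof
    assume lt2: "m2 < \<sigma> x1"
    obtain l' where l': "l' \<in> X" "\<sigma> l' = m2" using board_D(5)[OF s(1)] m2in Y1 by auto
    have "l' \<noteq> x1" using l' lt2 by auto
    moreover have "l' \<noteq> Suc x1" using l' l lS m2in by auto
    moreover have "x1 \<le> l'" using l' x1 fin by simp
    ultimately have "x1 + 2 \<le> l'" by simp
    then have "badA X g \<sigma>" unfolding badA_def using x1X l' lt2 m2in Y1
      by (intro bexI[of _ x1] bexI[of _ l']) auto
    then show False using s(2) by simp
  qed
  ultimately have "\<sigma> x1 = m2" by simp
  moreover have "2 \<le> card Y1"
  proof -
    have "{m1, m2} \<subseteq> Y1" using m1Y1 m2in by auto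
    then have "card {m1, m2} \<le> card Y1" using fY1 by (intro card_mono)
    then show ?thesis using m2in by simp
  qed
  ultimately show ?thesis using l lS m2_def by simp
qed

lemma A_split2:
  assumes fin: "finite X" "finite Y" and ne: "X \<noteq> {}" and x1: "x1 = Min X"
    and Y1: "Y1 = {y\<in>Y. g x1 y}" "Y1 \<noteq> {}" and m1: "m1 = Min Y1" and m2: "m2 = Min (Y1 - {m1})"
    and c2: "2 \<le> card Y1"
    and adj: "\<And>x y. x \<in> X \<Longrightarrow> Suc x \<in> X \<Longrightarrow> g (Suc x) y \<Longrightarrow> g x y"
    and sx: "Suc x1 \<in> X"
    and t: "\<rho> \<in> board (X-{x1}-{Suc x1}) (Y-{m2}-{m1}) g"
  shows "badA X g (\<rho>(Suc x1:=m1, x1:=m2)) \<longleftrightarrow> badA (X-{x1}-{Suc x1}) g \<rho>"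
proof
  let ?\<sigma> = "\<rho>(Suc x1:=m1, x1:=m2)"
  have x1X: "x1 \<in> X" using x1 fin ne by simp
  have fY1: "finite Y1" using Y1 fin by simp
  have ne2: "Y1 - {m1} \<noteq> {}"
  proof
    assume "Y1 - {m1} = {}"
    then have "Y1 \<subseteq> {m1}" by auto
    then have "card Y1 \<le> card {m1}" by (intro card_mono) auto
    then show False using c2 by simp
  qed
  assume "badA X g ?\<sigma>"
  then obtain j l where jl: "j\<in>X" "l\<in>X" "j+2 \<le> l" "?\<sigma> l < ?\<sigma> j" "g j (?\<sigma> l)"
    unfolding badA_def by blast
  have "x1 \<le> j" using jl(1) x1 fin by simp
  then have lx: "l \<noteq> x1" "l \<noteq> Suc x1" using jl(3) by auto
  have rl: "\<rho> l \<in> Y - {m2} - {m1}" using board_D(4)[OF t] jl(2) lx by simp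
  show "badA (X-{x1}-{Suc x1}) g \<rho>"
  proof (cases "j = x1 \<or> j = Suc x1")
    case True
    then have "g x1 (\<rho> l)" using jl(5) lx adj[OF x1X sx] by auto
    then have "\<rho> l \<in> Y1 - {m1}" "\<rho> l \<in> Y1" using rl Y1 by auto
    then have "m2 \<le> \<rho> l" "m1 \<le> \<rho> l" using m2 m1 fY1 by auto
    moreover have "?\<sigma> j \<le> m2"
      using True ne2 fY1 m1 m2 by (auto intro: Min_le simp: Min_in)
    ultimately show ?thesis using jl(4) lx by auto
  next
    case False
    then show ?thesis using jl lx unfolding badA_def by (intro bexI[of _ j] bexI[of _ l]) auto
  qed
next
  assume "badA (X-{x1}-{Suc x1}) g \<rho>"
  then obtain j l where jl: "j\<in>X-{x1}-{Suc x1}" "l\<in>X-{x1}-{Suc x1}" "j+2 \<le> l" "\<rho> l < \<rho> j" "g j (\<rho> l)"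
    unfolding badA_def by blast
  then show "badA X g (\<rho>(Suc x1:=m1, x1:=m2))" unfolding badA_def
    by (intro bexI[of _ j] bexI[of _ l]) auto
qed

lemma B_split1:
  assumes fin: "finite X" "finite Y" and ne: "X \<noteq> {}" and x1: "x1 = Min X"
    and M1: "M1 = Max Y"
    and t: "\<tau> \<in> board (X-{x1}) (Y-{M1}) g"
  shows "badB X g (\<tau>(x1:=M1)) \<longleftrightarrow> badB (X-{x1}) g \<tau>"
proof
  assume "badB X g (\<tau>(x1:=M1))"
  then obtain j l where jl: "j\<in>X" "l\<in>X" "j+2 \<le> l" "(\<tau>(x1:=M1)) j < (\<tau>(x1:=M1)) l" "g j ((\<tau>(x1:=M1)) j)"
    unfolding badB_def by blast
  have "x1 \<le> j" using jl(1) x1 fin by simp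
  then have lx: "l \<noteq> x1" using jl(3) by simp
  show "badB (X-{x1}) g \<tau>"
  proof (cases "j = x1")
    case True
    have "\<tau> l \<in> Y - {M1}" using board_D(4)[OF t] jl(2) lx by simp
    then have "\<tau> l \<le> M1" using M1 fin by simp
    then show ?thesis using jl(4) True lx by simp
  next
    case False
    then show ?thesis using jl lx unfolding badB_def by (intro bexI[of _ j] bexI[of _ l]) auto
  qed
next
  assume "badB (X-{x1}) g \<tau>"
  then obtain j l where jl: "j\<in>X-{x1}" "l\<in>X-{x1}" "j+2 \<le> l" "\<tau> j < \<tau> l" "g j (\<tau> j)"
    unfolding badB_def by blast
  then show "badB X g (\<tau>(x1:=M1))" unfolding badB_def
    by (intro bexI[of _ j] bexI[of _ l]) auto
qed

lemma B_struct:
  assumes fin: "finite X" "finite Y" and ne: "X \<noteq> {}" and x1: "x1 = Min X"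
    and M1: "M1 = Max Y"
    and s: "\<sigma> \<in> board X Y g" "\<not> badB X g \<sigma>" "\<sigma> x1 \<noteq> M1"
  shows "Suc x1 \<in> X \<and> \<sigma> (Suc x1) = M1 \<and> \<sigma> x1 = Max (Y - {M1})"
proof -
  have x1X: "x1 \<in> X" using x1 fin ne by simp
  have s1: "\<sigma> x1 \<in> Y" using board_D(4)[OF s(1) x1X] by simp
  have Yne: "Y \<noteq> {}" using s1 by auto
  have M1Y: "M1 \<in> Y" unfolding M1 using fin Yne by simp
  have lt: "\<sigma> x1 < M1" using s1 s(3) M1 fin by (simp add: order_le_neq_trans)
  have gx: "g x1 (\<sigma> x1)" using board_D(3)[OF s(1) x1X] .
  obtain l where l: "l \<in> X" "\<sigma> l = M1" using board_D(5)[OF s(1)] M1Y by auto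
  have "l \<noteq> x1" using l s(3) by auto
  moreover have "x1 \<le> l" using l x1 fin by simp
  moreover have "\<not> (x1 + 2 \<le> l)"
  proof
    assume "x1 + 2 \<le> l"
    then have "badB X g \<sigma>" unfolding badB_def using x1X l lt gx
      by (intro bexI[of _ x1] bexI[of _ l]) auto
    then show False using s(2) by simp
  qed
  ultimately have lS: "l = Suc x1" by simp
  have ne2: "Y - {M1} \<noteq> {}" using s1 s(3) by auto
  define M2 where "M2 = Max (Y - {M1})"
  have M2in: "M2 \<in> Y - {M1}" unfolding M2_def using ne2 fin by (intro Max_in) auto
  have "\<sigma> x1 \<le> M2" using s1 s(3) fin M2_def by simp
  moreover have "\<not> \<sigma> x1 < M2"
  proof
    assume lt2: "\<sigma> x1 < M2"
    obtain l' where l': "l' \<in> X" "\<sigma> l' = M2" using board_D(5)[OF s(1)] M2in by auto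
    have "l' \<noteq> x1" using l' lt2 by auto
    moreover have "l' \<noteq> Suc x1" using l' l lS M2in by auto
    moreover have "x1 \<le> l'" using l' x1 fin by simp
    ultimately have "x1 + 2 \<le> l'" by simp
    then have "badB X g \<sigma>" unfolding badB_def using x1X l' lt2 gx
      by (intro bexI[of _ x1] bexI[of _ l']) auto
    then show False using s(2) by simp
  qed
  ultimately have "\<sigma> x1 = M2" by simp
  then show ?thesis using l lS M2_def by simp
qed

lemma B_split2:
  assumes fin: "finite X" "finite Y" and ne: "X \<noteq> {}" and x1: "x1 = Min X"
    and M1: "M1 = Max Y" and M2: "M2 = Max (Y - {M1})" and ne2: "Y - {M1} \<noteq> {}"
    and t: "\<rho> \<in> board (X-{x1}-{Suc x1}) (Y-{M2}-{M1}) g"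
  shows "badB X g (\<rho>(Suc x1:=M1, x1:=M2)) \<longleftrightarrow> badB (X-{x1}-{Suc x1}) g \<rho>"
proof
  let ?\<sigma> = "\<rho>(Suc x1:=M1, x1:=M2)"
  assume "badB X g ?\<sigma>"
  then obtain j l where jl: "j\<in>X" "l\<in>X" "j+2 \<le> l" "?\<sigma> j < ?\<sigma> l" "g j (?\<sigma> j)"
    unfolding badB_def by blast
  have "x1 \<le> j" using jl(1) x1 fin by simp
  then have lx: "l \<noteq> x1" "l \<noteq> Suc x1" using jl(3) by auto
  have rl: "\<rho> l \<in> Y - {M2} - {M1}" using board_D(4)[OF t] jl(2) lx by simp
  show "badB (X-{x1}-{Suc x1}) g \<rho>"
  proof (cases "j = x1 \<or> j = Suc x1")
    case True
    have "\<rho> l \<le> M2" using rl M2 fin by simp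
    moreover have "M2 \<le> M1" using M2 M1 fin ne2 by (simp add: Max_mono)
    moreover have "?\<sigma> j \<ge> M2" using True \<open>M2 \<le> M1\<close> by auto
    ultimately show ?thesis using jl(4) lx by auto
  next
    case False
    then show ?thesis using jl lx unfolding badB_def by (intro bexI[of _ j] bexI[of _ l]) auto
  qed
next
  assume "badB (X-{x1}-{Suc x1}) g \<rho>"
  then obtain j l where jl: "j\<in>X-{x1}-{Suc x1}" "l\<in>X-{x1}-{Suc x1}" "j+2 \<le> l" "\<rho> j < \<rho> l" "g j (\<rho> j)"
    unfolding badB_def by blast
  then show "badB X g (\<rho>(Suc x1:=M1, x1:=M2))" unfolding badB_def
    by (intro bexI[of _ j] bexI[of _ l]) auto
qed

lemma recA:
  assumes fin: "finite X" "finite Y" and ne: "X \<noteq> {}" and x1: "x1 = Min X"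
    and Y1: "Y1 = {y\<in>Y. g x1 y}" "Y1 \<noteq> {}" and m1: "m1 = Min Y1" and m2: "m2 = Min (Y1 - {m1})"
    and monox: "\<And>x x' y. g x y \<Longrightarrow> x \<le> x' \<Longrightarrow> g x' y"
    and adj: "\<And>x y. x \<in> X \<Longrightarrow> Suc x \<in> X \<Longrightarrow> g (Suc x) y \<Longrightarrow> g x y"
  shows "card {\<sigma>\<in>board X Y g. \<not> badA X g \<sigma>} =
     card {\<tau>\<in>board (X-{x1}) (Y-{m1}) g. \<not> badA (X-{x1}) g \<tau>} +
     (if Suc x1 \<in> X \<and> 2 \<le> card Y1 then
        card {\<rho>\<in>board (X-{x1}-{Suc x1}) (Y-{m2}-{m1}) g. \<not> badA (X-{x1}-{Suc x1}) g \<rho>} else 0)"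
proof -
  have x1X: "x1 \<in> X" using x1 fin ne by simp
  have fY1: "finite Y1" using Y1 fin by simp
  have m1Y1: "m1 \<in> Y1" unfolding m1 by (rule Min_in[OF fY1 Y1(2)])
  have m1Y: "m1 \<in> Y" "g x1 m1" using m1Y1 Y1 by auto
  define S1 where "S1 = {\<sigma>\<in>board X Y g. \<sigma> x1 = m1 \<and> \<not> badA X g \<sigma>}"
  define S2 where "S2 = {\<sigma>\<in>board X Y g. \<sigma> x1 \<noteq> m1 \<and> \<not> badA X g \<sigma>}"
  have split: "{\<sigma>\<in>board X Y g. \<not> badA X g \<sigma>} = S1 \<union> S2" unfolding S1_def S2_def by auto
  have cS: "card {\<sigma>\<in>board X Y g. \<not> badA X g \<sigma>} = card S1 + card S2"
    unfolding split by (rule card_Un_disjoint) (auto simp: S1_def S2_def intro: finite_subset[OF _ board_fin[OF fin]])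
  have c1: "card S1 = card {\<tau>\<in>board (X-{x1}) (Y-{m1}) g. \<not> badA (X-{x1}) g \<tau>}"
  proof -
    have "card S1 = card {\<tau>\<in>board (X-{x1}) (Y-{m1}) g. \<not> badA X g (\<tau>(x1:=m1))}"
      unfolding S1_def by (rule card_fix[where g=g, OF x1X m1Y])
    also have "\<dots> = card {\<tau>\<in>board (X-{x1}) (Y-{m1}) g. \<not> badA (X-{x1}) g \<tau>}"
      using A_split1[where g=g, OF fin ne x1 Y1 m1] by (intro arg_cong[where f=card] Collect_cong) auto
    finally show ?thesis .
  qed
  have c2: "card S2 = (if Suc x1 \<in> X \<and> 2 \<le> card Y1 then
        card {\<rho>\<in>board (X-{x1}-{Suc x1}) (Y-{m2}-{m1}) g. \<not> badA (X-{x1}-{Suc x1}) g \<rho>} else 0)"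
  proof (cases "Suc x1 \<in> X \<and> 2 \<le> card Y1")
    case False
    have "S2 = {}" using A_struct[where g=g, OF fin ne x1 Y1 m1] False unfolding S2_def by blast
    then show ?thesis using False by auto
  next
    case True
    have ne2: "Y1 - {m1} \<noteq> {}"
    proof
      assume "Y1 - {m1} = {}"
      then have "Y1 \<subseteq> {m1}" by auto
      then have "card Y1 \<le> card {m1}" by (intro card_mono) auto
      then show False using True by simp
    qed
    have m2Y1: "m2 \<in> Y1 - {m1}" unfolding m2 using ne2 fY1 by (intro Min_in) auto
    have S2eq: "S2 = {\<sigma>\<in>board X Y g. \<sigma> x1 = m2 \<and> (\<sigma> (Suc x1) = m1 \<and> \<not> badA X g \<sigma>)}"
      using A_struct[where g=g, OF fin ne x1 Y1 m1] m2Y1 unfolding S2_def m2 by auto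
    have "card S2 = card {\<tau>\<in>board (X-{x1}) (Y-{m2}) g. (\<tau>(x1:=m2)) (Suc x1) = m1 \<and> \<not> badA X g (\<tau>(x1:=m2))}"
      unfolding S2eq by (rule card_fix) (use x1X m2Y1 Y1 in auto)
    also have "\<dots> = card {\<tau>\<in>board (X-{x1}) (Y-{m2}) g. \<tau> (Suc x1) = m1 \<and> \<not> badA X g (\<tau>(x1:=m2))}"
      by simp
    also have "\<dots> = card {\<rho>\<in>board (X-{x1}-{Suc x1}) (Y-{m2}-{m1}) g. \<not> badA X g (\<rho>(Suc x1:=m1, x1:=m2))}"
      by (rule card_fix) (use True m1Y m2Y1 monox in auto)
    also have "\<dots> = card {\<rho>\<in>board (X-{x1}-{Suc x1}) (Y-{m2}-{m1}) g. \<not> badA (X-{x1}-{Suc x1}) g \<rho>}"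
      using A_split2[where g=g, OF fin ne x1 Y1 m1 m2 _ adj] True by (intro arg_cong[where f=card] Collect_cong) auto
    finally show ?thesis using True by simp
  qed
  show ?thesis using cS c1 c2 by simp
qed

lemma recB:
  assumes fin: "finite X" "finite Y" and ne: "X \<noteq> {}" and x1: "x1 = Min X"
    and Y1: "Y1 = {y\<in>Y. g x1 y}" "Y1 \<noteq> {}" and M1: "M1 = Max Y" and M2: "M2 = Max (Y - {M1})"
    and monox: "\<And>x x' y. g x y \<Longrightarrow> x \<le> x' \<Longrightarrow> g x' y"
    and monoy: "\<And>x y y'. g x y \<Longrightarrow> y \<le> y' \<Longrightarrow> g x y'"
  shows "card {\<sigma>\<in>board X Y g. \<not> badB X g \<sigma>} =
     card {\<tau>\<in>board (X-{x1}) (Y-{M1}) g. \<not> badB (X-{x1}) g \<tau>} +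
     (if Suc x1 \<in> X \<and> 2 \<le> card Y1 then
        card {\<rho>\<in>board (X-{x1}-{Suc x1}) (Y-{M2}-{M1}) g. \<not> badB (X-{x1}-{Suc x1}) g \<rho>} else 0)"
proof -
  have x1X: "x1 \<in> X" using x1 fin ne by simp
  have fY1: "finite Y1" using Y1 fin by simp
  have Yne: "Y \<noteq> {}" using Y1 by auto
  have M1Y: "M1 \<in> Y" unfolding M1 using fin Yne by simp
  obtain y0 where y0: "y0 \<in> Y" "g x1 y0" using Y1 by auto
  have gM1: "g x1 M1" using monoy[OF y0(2)] y0(1) M1 fin by simp
  define S1 where "S1 = {\<sigma>\<in>board X Y g. \<sigma> x1 = M1 \<and> \<not> badB X g \<sigma>}"
  define S2 where "S2 = {\<sigma>\<in>board X Y g. \<sigma> x1 \<noteq> M1 \<and> \<not> badB X g \<sigma>}"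
  have split: "{\<sigma>\<in>board X Y g. \<not> badB X g \<sigma>} = S1 \<union> S2" unfolding S1_def S2_def by auto
  have cS: "card {\<sigma>\<in>board X Y g. \<not> badB X g \<sigma>} = card S1 + card S2"
    unfolding split by (rule card_Un_disjoint) (auto simp: S1_def S2_def intro: finite_subset[OF _ board_fin[OF fin]])
  have c1: "card S1 = card {\<tau>\<in>board (X-{x1}) (Y-{M1}) g. \<not> badB (X-{x1}) g \<tau>}"
  proof -
    have "card S1 = card {\<tau>\<in>board (X-{x1}) (Y-{M1}) g. \<not> badB X g (\<tau>(x1:=M1))}"
      unfolding S1_def by (rule card_fix[where g=g, OF x1X M1Y gM1])
    also have "\<dots> = card {\<tau>\<in>board (X-{x1}) (Y-{M1}) g. \<not> badB (X-{x1}) g \<tau>}"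
      using B_split1[where g=g, OF fin ne x1 M1] by (intro arg_cong[where f=card] Collect_cong) auto
    finally show ?thesis .
  qed
  have c2: "card S2 = (if Suc x1 \<in> X \<and> 2 \<le> card Y1 then
        card {\<rho>\<in>board (X-{x1}-{Suc x1}) (Y-{M2}-{M1}) g. \<not> badB (X-{x1}-{Suc x1}) g \<rho>} else 0)"
  proof (cases "Suc x1 \<in> X \<and> 2 \<le> card Y1")
    case False
    have "S2 = {}"
    proof (rule ccontr)
      assume "S2 \<noteq> {}"
      then obtain \<sigma> where s: "\<sigma> \<in> board X Y g" "\<not> badB X g \<sigma>" "\<sigma> x1 \<noteq> M1" unfolding S2_def by auto
      have st: "Suc x1 \<in> X" "\<sigma> (Suc x1) = M1" "\<sigma> x1 = Max (Y - {M1})"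
        using B_struct[where g=g, OF fin ne x1 M1 s] by auto
      have "\<sigma> x1 \<in> Y1" using board_D(3,4)[OF s(1) x1X] Y1 by simp
      then have "{\<sigma> x1, M1} \<subseteq> Y1" using gM1 M1Y Y1 by auto
      then have "card {\<sigma> x1, M1} \<le> card Y1" using fY1 by (intro card_mono)
      then have "2 \<le> card Y1" using s(3) by simp
      then show False using False st by simp
    qed
    then show ?thesis using False by auto
  next
    case True
    obtain y1 where y1: "y1 \<in> Y1" "y1 \<noteq> M1"
    proof -
      have "\<not> Y1 \<subseteq> {M1}"
      proof
        assume "Y1 \<subseteq> {M1}"
        then have "card Y1 \<le> card {M1}" by (intro card_mono) auto
        then show False using True by simp
      qed
      then show ?thesis using that by auto
    qed
    have ne2: "Y - {M1} \<noteq> {}" using y1 Y1 by auto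
    have M2Y: "M2 \<in> Y - {M1}" unfolding M2 using ne2 fin by (intro Max_in) auto
    have "y1 \<le> M2" using y1 Y1 M2 fin by simp
    then have gM2: "g x1 M2" using monoy y1 Y1 by auto
    have S2eq: "S2 = {\<sigma>\<in>board X Y g. \<sigma> x1 = M2 \<and> (\<sigma> (Suc x1) = M1 \<and> \<not> badB X g \<sigma>)}"
      using B_struct[where g=g, OF fin ne x1 M1] M2Y unfolding S2_def M2 by auto
    have "card S2 = card {\<tau>\<in>board (X-{x1}) (Y-{M2}) g. (\<tau>(x1:=M2)) (Suc x1) = M1 \<and> \<not> badB X g (\<tau>(x1:=M2))}"
      unfolding S2eq by (rule card_fix) (use x1X M2Y gM2 in auto)
    also have "\<dots> = card {\<tau>\<in>board (X-{x1}) (Y-{M2}) g. \<tau> (Suc x1) = M1 \<and> \<not> badB X g (\<tau>(x1:=M2))}"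
      by simp
    also have "\<dots> = card {\<rho>\<in>board (X-{x1}-{Suc x1}) (Y-{M2}-{M1}) g. \<not> badB X g (\<rho>(Suc x1:=M1, x1:=M2))}"
      by (rule card_fix) (use True M1Y M2Y gM1 monox in auto)
    also have "\<dots> = card {\<rho>\<in>board (X-{x1}-{Suc x1}) (Y-{M2}-{M1}) g. \<not> badB (X-{x1}-{Suc x1}) g \<rho>}"
      using B_split2[where g=g, OF fin ne x1 M1 M2 ne2] by (intro arg_cong[where f=card] Collect_cong) auto
    finally show ?thesis using True by simp
  qed
  show ?thesis using cS c1 c2 by simp
qed

lemma cnt_remove:
  assumes "finite Y" "v \<in> Y" "g x v"
  shows "card {y\<in>Y-{v}. g x y} = card {y\<in>Y. g x y} - 1"
proof -
  have "{y\<in>Y-{v}. g x y} = {y\<in>Y. g x y} - {v}" by auto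
  then show ?thesis using assms by (simp add: card_Diff_singleton)
qed

lemma board_eq:
  assumes monox: "\<And>x x' y. g x y \<Longrightarrow> x \<le> x' \<Longrightarrow> g x' y"
    and monoy: "\<And>x y y'. g x y \<Longrightarrow> y \<le> y' \<Longrightarrow> g x y'"
  shows "finite X \<Longrightarrow> finite Y \<Longrightarrow> finite Y' \<Longrightarrow> card Y = card X \<Longrightarrow> card Y' = card X \<Longrightarrow>
    (\<And>x y. x \<in> X \<Longrightarrow> Suc x \<in> X \<Longrightarrow> g (Suc x) y \<Longrightarrow> g x y) \<Longrightarrow>
    (\<forall>x\<in>X. card {y\<in>Y. g x y} = card {y\<in>Y'. g x y}) \<Longrightarrow>
    card {\<sigma>\<in>board X Y g. \<not> badA X g \<sigma>} = card {\<sigma>\<in>board X Y' g. \<not> badB X g \<sigma>}"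
proof (induction "card X" arbitrary: X Y Y' rule: less_induct)
  case less
  note fin = less.prems(1,2) and fin' = less.prems(1,3)
  note adj = less.prems(6)
  show ?case
  proof (cases "X = {}")
    case True
    then have "Y = {}" "Y' = {}" using less.prems by auto
    then show ?thesis using True by (simp add: badA_def badB_def)
  next
    case ne: False
    define x1 where "x1 = Min X"
    have x1X: "x1 \<in> X" using x1_def fin ne by simp
    have x1le: "\<And>x. x \<in> X \<Longrightarrow> x1 \<le> x" using x1_def fin by simp
    define Y1 where "Y1 = {y\<in>Y. g x1 y}"
    define Y1' where "Y1' = {y\<in>Y'. g x1 y}"
    have cY1: "card Y1 = card Y1'" using less.prems(7) x1X unfolding Y1_def Y1'_def by simp
    have fY1: "finite Y1" "finite Y1'" using fin fin' unfolding Y1_def Y1'_def by auto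
    show ?thesis
    proof (cases "Y1 = {}")
      case True
      then have True': "Y1' = {}" using cY1 fY1 by simp
      have e1: "{\<sigma>\<in>board X Y g. \<not> badA X g \<sigma>} = {}"
        using True board_D(3,4)[OF _ x1X] unfolding Y1_def by blast
      have e2: "{\<sigma>\<in>board X Y' g. \<not> badB X g \<sigma>} = {}"
        using True' board_D(3,4)[OF _ x1X] unfolding Y1'_def by blast
      show ?thesis unfolding e1 e2 by simp
    next
      case Y1ne: False
      then have Y1ne': "Y1' \<noteq> {}" using cY1 fY1 by auto
      define m1 where "m1 = Min Y1"
      define m2 where "m2 = Min (Y1 - {m1})"
      define M1 where "M1 = Max Y'"
      define M2 where "M2 = Max (Y' - {M1})"
      have rA: "card {\<sigma>\<in>board X Y g. \<not> badA X g \<sigma>} =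
         card {\<tau>\<in>board (X-{x1}) (Y-{m1}) g. \<not> badA (X-{x1}) g \<tau>} +
         (if Suc x1 \<in> X \<and> 2 \<le> card Y1 then
            card {\<rho>\<in>board (X-{x1}-{Suc x1}) (Y-{m2}-{m1}) g. \<not> badA (X-{x1}-{Suc x1}) g \<rho>} else 0)"
        by (rule recA[where g=g, OF fin ne x1_def Y1_def Y1ne m1_def m2_def monox adj])
      have rB: "card {\<sigma>\<in>board X Y' g. \<not> badB X g \<sigma>} =
         card {\<tau>\<in>board (X-{x1}) (Y'-{M1}) g. \<not> badB (X-{x1}) g \<tau>} +
         (if Suc x1 \<in> X \<and> 2 \<le> card Y1' then
            card {\<rho>\<in>board (X-{x1}-{Suc x1}) (Y'-{M2}-{M1}) g. \<not> badB (X-{x1}-{Suc x1}) g \<rho>} else 0)"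
        by (rule recB[where g=g, OF fin' ne x1_def Y1'_def Y1ne' M1_def M2_def monox monoy])
      have m1Y1: "m1 \<in> Y1" unfolding m1_def by (rule Min_in[OF fY1(1) Y1ne])
      have Y'ne: "Y' \<noteq> {}" using Y1ne' Y1'_def by auto
      have M1Y: "M1 \<in> Y'" unfolding M1_def using fin' Y'ne by simp
      obtain y0 where y0: "y0 \<in> Y'" "g x1 y0" using Y1ne' Y1'_def by auto
      have gM1: "g x1 M1" using monoy[OF y0(2)] y0(1) M1_def fin' by simp
      have gx_m1: "g x m1" if "x \<in> X" for x using m1Y1 Y1_def monox x1le[OF that] by auto
      have gx_M1: "g x M1" if "x \<in> X" for x using gM1 monox x1le[OF that] by auto
      have IH1: "card {\<tau>\<in>board (X-{x1}) (Y-{m1}) g. \<not> badA (X-{x1}) g \<tau>} =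
                 card {\<tau>\<in>board (X-{x1}) (Y'-{M1}) g. \<not> badB (X-{x1}) g \<tau>}"
      proof (rule less.hyps)
        show "card (X - {x1}) < card X" using fin x1X by (meson card_Diff1_less)
        show "finite (X - {x1})" "finite (Y - {m1})" "finite (Y' - {M1})" using fin fin' by auto
        show "card (Y - {m1}) = card (X - {x1})" using less.prems(4) m1Y1 Y1_def x1X fin by simp
        show "card (Y' - {M1}) = card (X - {x1})" using less.prems(5) M1Y x1X fin by simp
        show "\<And>x y. x \<in> X - {x1} \<Longrightarrow> Suc x \<in> X - {x1} \<Longrightarrow> g (Suc x) y \<Longrightarrow> g x y" using adj by auto
        show "\<forall>x\<in>X - {x1}. card {y \<in> Y - {m1}. g x y} = card {y \<in> Y' - {M1}. g x y}"
        proof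
          fix x assume x: "x \<in> X - {x1}"
          have "card {y \<in> Y - {m1}. g x y} = card {y\<in>Y. g x y} - 1"
            using cnt_remove[of Y m1 g x] fin m1Y1 Y1_def gx_m1 x by auto
          also have "\<dots> = card {y\<in>Y'. g x y} - 1" using less.prems(7) x by auto
          also have "\<dots> = card {y \<in> Y' - {M1}. g x y}"
            using cnt_remove[of Y' M1 g x] fin' M1Y gx_M1 x by auto
          finally show "card {y \<in> Y - {m1}. g x y} = card {y \<in> Y' - {M1}. g x y}" .
        qed
      qed
      have IH2: "card {\<rho>\<in>board (X-{x1}-{Suc x1}) (Y-{m2}-{m1}) g. \<not> badA (X-{x1}-{Suc x1}) g \<rho>} =
                 card {\<rho>\<in>board (X-{x1}-{Suc x1}) (Y'-{M2}-{M1}) g. \<not> badB (X-{x1}-{Suc x1}) g \<rho>}"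
        if C: "Suc x1 \<in> X" "2 \<le> card Y1"
      proof -
        have ne2: "Y1 - {m1} \<noteq> {}"
        proof
          assume "Y1 - {m1} = {}"
          then have "Y1 \<subseteq> {m1}" by auto
          then have "card Y1 \<le> card {m1}" by (intro card_mono) auto
          then show False using C by simp
        qed
        have m2Y1: "m2 \<in> Y1 - {m1}" unfolding m2_def using ne2 fY1 by (intro Min_in) auto
        obtain y1 where y1: "y1 \<in> Y1'" "y1 \<noteq> M1"
        proof -
          have "\<not> Y1' \<subseteq> {M1}"
          proof
            assume "Y1' \<subseteq> {M1}"
            then have "card Y1' \<le> card {M1}" by (intro card_mono) auto
            then show False using C cY1 by simp
          qed
          then show ?thesis using that by auto
        qed
        have ne2': "Y' - {M1} \<noteq> {}" using y1 Y1'_def by auto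
        have M2Y: "M2 \<in> Y' - {M1}" unfolding M2_def using ne2' fin' by (intro Max_in) auto
        have "y1 \<le> M2" using y1 Y1'_def M2_def fin' by simp
        then have gM2: "g x1 M2" using monoy y1 Y1'_def by auto
        have gx_m2: "g x m2" if "x \<in> X" for x using m2Y1 Y1_def monox x1le[OF that] by auto
        have gx_M2: "g x M2" if "x \<in> X" for x using gM2 monox x1le[OF that] by auto
        show ?thesis
        proof (rule less.hyps)
          show "card (X - {x1} - {Suc x1}) < card X" using fin x1X C
            by (metis Diff_subset card_mono card_Diff1_less dual_order.strict_trans2 finite_Diff)
          show "finite (X - {x1} - {Suc x1})" "finite (Y - {m2} - {m1})" "finite (Y' - {M2} - {M1})"
            using fin fin' by auto
          show "card (Y - {m2} - {m1}) = card (X - {x1} - {Suc x1})"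
            using less.prems(4) m1Y1 m2Y1 Y1_def x1X C fin by (simp add: card_Diff_singleton)
          show "card (Y' - {M2} - {M1}) = card (X - {x1} - {Suc x1})"
            using less.prems(5) M1Y M2Y x1X C fin fin' by (simp add: card_Diff_singleton)
          show "\<And>x y. x \<in> X - {x1} - {Suc x1} \<Longrightarrow> Suc x \<in> X - {x1} - {Suc x1} \<Longrightarrow> g (Suc x) y \<Longrightarrow> g x y"
            using adj by auto
          show "\<forall>x\<in>X - {x1} - {Suc x1}. card {y \<in> Y - {m2} - {m1}. g x y} = card {y \<in> Y' - {M2} - {M1}. g x y}"
          proof
            fix x assume x: "x \<in> X - {x1} - {Suc x1}"
            have "card {y \<in> Y - {m2} - {m1}. g x y} = card {y\<in>Y - {m2}. g x y} - 1"
              using cnt_remove[of "Y - {m2}" m1 g x] fin m1Y1 m2Y1 Y1_def gx_m1 x by auto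
            also have "\<dots> = card {y\<in>Y. g x y} - 1 - 1"
              using cnt_remove[of Y m2 g x] fin m2Y1 Y1_def gx_m2 x by auto
            also have "\<dots> = card {y\<in>Y'. g x y} - 1 - 1" using less.prems(7) x by auto
            also have "\<dots> = card {y\<in>Y' - {M2}. g x y} - 1"
              using cnt_remove[of Y' M2 g x] fin' M2Y gx_M2 x by auto
            also have "\<dots> = card {y \<in> Y' - {M2} - {M1}. g x y}"
              using cnt_remove[of "Y' - {M2}" M1 g x] fin' M1Y M2Y gx_M1 x by auto
            finally show "card {y \<in> Y - {m2} - {m1}. g x y} = card {y \<in> Y' - {M2} - {M1}. g x y}" .
          qed
        qed
      qed
      show ?thesis using rA rB IH1 IH2 cY1 by simp
    qed
  qed
qed


lemma card_fibers:
  assumes "finite S"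
  shows "card {x\<in>S. P x} = (\<Sum>\<kappa>\<in>f ` S. card {x\<in>S. f x = \<kappa> \<and> P x})"
proof -
  have "{x\<in>S. P x} = (\<Union>\<kappa>\<in>f ` S. {x\<in>S. f x = \<kappa> \<and> P x})" by auto
  then have "card {x\<in>S. P x} = card (\<Union>\<kappa>\<in>f ` S. {x\<in>S. f x = \<kappa> \<and> P x})" by simp
  also have "\<dots> = (\<Sum>\<kappa>\<in>f ` S. card {x\<in>S. f x = \<kappa> \<and> P x})"
    using assms by (intro card_UN_disjoint) auto
  finally show ?thesis .
qed

locale pfx =
  fixes n k :: nat and A :: "nat set" and R :: "(nat \<times> nat) set"
  assumes k4: "4 \<le> k" and Asub: "A \<subseteq> {1..k-3}" and Alast: "k - 3 \<in> A"
begin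

definition occ :: "(nat \<Rightarrow> nat) \<Rightarrow> (nat \<Rightarrow> nat) \<Rightarrow> bool" where
  "occ \<pi> W \<longleftrightarrow> strict_mono_on {1..k-3} W \<and> W ` {1..k-3} \<subseteq> {1..n} \<and>
     (\<forall>a\<in>A. \<forall>b\<in>A. pop_less R a b \<longrightarrow> \<pi> (W a) < \<pi> (W b))"

definition G :: "(nat \<Rightarrow> nat) \<Rightarrow> nat \<Rightarrow> nat \<Rightarrow> bool" where
  "G \<pi> x y \<longleftrightarrow> (\<exists>W. occ \<pi> W \<and> W (k-3) < x \<and> (\<forall>a\<in>A. \<pi> (W a) < y))"

definition Xs :: "(nat \<Rightarrow> nat) \<Rightarrow> nat set" where
  "Xs \<pi> = {x\<in>{1..n}. G \<pi> x (\<pi> x)}"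

definition key :: "(nat \<Rightarrow> nat) \<Rightarrow> nat set \<times> (nat \<Rightarrow> nat)" where
  "key \<pi> = (Xs \<pi>, \<lambda>x. if x \<in> Xs \<pi> then 0 else \<pi> x)"

definition CA :: "(nat \<Rightarrow> nat) \<Rightarrow> bool" where
  "CA \<pi> \<longleftrightarrow> (\<exists>j l. j + 2 \<le> l \<and> l \<le> n \<and> \<pi> l < \<pi> j \<and> G \<pi> j (\<pi> l))"

definition CB :: "(nat \<Rightarrow> nat) \<Rightarrow> bool" where
  "CB \<pi> \<longleftrightarrow> (\<exists>j l. j + 2 \<le> l \<and> l \<le> n \<and> \<pi> j < \<pi> l \<and> G \<pi> j (\<pi> j))"

lemma G_monoy: "G \<pi> x y \<Longrightarrow> y \<le> y' \<Longrightarrow> G \<pi> x y'"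
  unfolding G_def by (meson order_less_le_trans)

lemma G_monox: "G \<pi> x y \<Longrightarrow> x \<le> x' \<Longrightarrow> G \<pi> x' y"
  unfolding G_def by (meson order_less_le_trans)

lemma occ_le: assumes "occ \<pi> W" "a \<in> A" shows "W a \<le> W (k-3)"
proof -
  have a: "a \<in> {1..k-3}" using Asub assms(2) by blast
  have l: "k-3 \<in> {1..k-3}" using k4 by simp
  have sm: "strict_mono_on {1..k-3} W" using assms(1) unfolding occ_def by simp
  show ?thesis
  proof (cases "a = k-3")
    case True then show ?thesis by simp
  next
    case False
    then have "a < k-3" using a by simp
    then show ?thesis using strict_mono_onD[OF sm a l] by simp
  qed
qed

lemma occ_in: assumes "occ \<pi> W" "a \<in> A" shows "W a \<in> {1..n}"
proof -
  have a: "a \<in> {1..k-3}" using Asub assms(2) by blast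
  have "W ` {1..k-3} \<subseteq> {1..n}" using assms(1) unfolding occ_def by simp
  then show ?thesis using a by blast
qed

lemma occ_last_in: "occ \<pi> W \<Longrightarrow> W (k-3) \<in> {1..n}"
  using occ_in Alast by blast

lemma occ_cong: "(\<forall>a\<in>A. \<pi>' (W a) = \<pi> (W a)) \<Longrightarrow> occ \<pi>' W = occ \<pi> W"
  unfolding occ_def by auto

lemma G_pos: assumes "G \<pi> x y" shows "1 \<le> x"
proof -
  obtain W where "occ \<pi> W" "W (k-3) < x" using assms unfolding G_def by blast
  then show ?thesis using occ_last_in[of \<pi> W] by simp
qed

lemma G_min:
  assumes "G \<pi> x y"
  shows "\<exists>W. occ \<pi> W \<and> W (k-3) < x \<and> (\<forall>a\<in>A. \<pi> (W a) < y) \<and> (\<forall>a\<in>A. W a \<notin> Xs \<pi>)"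
proof -
  let ?P = "\<lambda>W. occ \<pi> W \<and> W (k-3) < x \<and> (\<forall>a\<in>A. \<pi> (W a) < y)"
  obtain W0 where "?P W0" using assms unfolding G_def by blast
  define W where "W = arg_min (\<lambda>W. W (k-3)) ?P"
  have PO: "?P W" and minO: "\<And>W'. ?P W' \<Longrightarrow> W (k-3) \<le> W' (k-3)"
    using arg_min_nat_lemma[of ?P W0 "\<lambda>W. W (k-3)"] \<open>?P W0\<close> unfolding W_def by auto
  have "W a \<notin> Xs \<pi>" if a: "a \<in> A" for a
  proof
    assume "W a \<in> Xs \<pi>"
    then have "G \<pi> (W a) (\<pi> (W a))" unfolding Xs_def by simp
    then obtain W' where W': "occ \<pi> W'" "W' (k-3) < W a" "\<forall>b\<in>A. \<pi> (W' b) < \<pi> (W a)"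
      unfolding G_def by blast
    have "W a \<le> W (k-3)" using occ_le PO a by blast
    moreover have "\<pi> (W a) < y" using PO a by blast
    ultimately have "\<forall>b\<in>A. \<pi> (W' b) < y" using W'(3) by auto
    moreover have "W' (k-3) < x" using W'(2) \<open>W a \<le> W (k-3)\<close> PO by simp
    ultimately have "?P W'" using W'(1) by blast
    then have "W (k-3) \<le> W' (k-3)" by (rule minO)
    then show False using W' \<open>W a \<le> W (k-3)\<close> by simp
  qed
  then show ?thesis using PO by blast
qed

lemma G_transfer:
  assumes "\<forall>z\<in>{1..n}. z \<notin> Xs \<pi> \<longrightarrow> \<pi>' z = \<pi> z" and "G \<pi> x y"
  shows "G \<pi>' x y"
proof -
  obtain W where W: "occ \<pi> W" "W (k-3) < x" "\<forall>a\<in>A. \<pi> (W a) < y" "\<forall>a\<in>A. W a \<notin> Xs \<pi>"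
    using G_min[OF assms(2)] by blast
  have eq: "\<forall>a\<in>A. \<pi>' (W a) = \<pi> (W a)" using assms(1) W(1,4) occ_in by blast
  then have "occ \<pi>' W" using occ_cong W(1) by blast
  then show ?thesis unfolding G_def using W eq by auto
qed

lemma G_adj:
  assumes "x \<in> Xs \<pi>" "G \<pi> (Suc x) y"
  shows "G \<pi> x y"
proof -
  obtain W where W: "occ \<pi> W" "W (k-3) < Suc x" "\<forall>a\<in>A. \<pi> (W a) < y"
    using assms(2) unfolding G_def by blast
  show ?thesis
  proof (cases "W (k-3) < x")
    case True then show ?thesis using W unfolding G_def by blast
  next
    case False
    then have "W (k-3) = x" using W(2) by simp
    then have "\<pi> x < y" using W(3) Alast by force
    moreover have "G \<pi> x (\<pi> x)" using assms(1) unfolding Xs_def by simp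
    ultimately show ?thesis using G_monoy by fastforce
  qed
qed

lemma G_merge:
  assumes out: "\<forall>z. z \<notin> Xs \<pi>0 \<longrightarrow> \<pi> z = \<pi>0 z" and ins: "\<forall>z\<in>Xs \<pi>0. G \<pi>0 z (\<pi> z)"
  shows "G \<pi> x y \<longleftrightarrow> G \<pi>0 x y"
proof
  assume "G \<pi>0 x y"
  then show "G \<pi> x y" using G_transfer[of \<pi>0 \<pi>] out by blast
next
  assume "G \<pi> x y"
  then obtain W where W: "occ \<pi> W" "W (k-3) < x" "\<forall>a\<in>A. \<pi> (W a) < y"
    unfolding G_def by blast
  show "G \<pi>0 x y"
  proof (cases "\<exists>a\<in>A. W a \<in> Xs \<pi>0")
    case True
    then obtain a where a: "a \<in> A" "W a \<in> Xs \<pi>0" by blast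
    have "G \<pi>0 (W a) (\<pi> (W a))" using ins a by blast
    moreover have "W a \<le> x" using occ_le[OF W(1) a(1)] W(2) by simp
    moreover have "\<pi> (W a) \<le> y" using W(3) a by force
    ultimately show ?thesis using G_monox G_monoy by blast
  next
    case False
    then have eq: "\<forall>a\<in>A. \<pi>0 (W a) = \<pi> (W a)" using out by metis
    then have "occ \<pi>0 W" using occ_cong W(1) by blast
    then show ?thesis unfolding G_def using W eq by auto
  qed
qed


lemma fib_props:
  assumes "key \<pi> = key \<pi>0"
  shows "Xs \<pi> = Xs \<pi>0" "\<And>z. z \<notin> Xs \<pi>0 \<Longrightarrow> \<pi> z = \<pi>0 z"
proof -
  show X: "Xs \<pi> = Xs \<pi>0" using assms unfolding key_def by simp
  fix z assume z: "z \<notin> Xs \<pi>0"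
  have "(\<lambda>x. if x \<in> Xs \<pi> then 0 else \<pi> x) = (\<lambda>x. if x \<in> Xs \<pi>0 then 0 else \<pi>0 x)"
  proof -
    have "snd (key \<pi>) = snd (key \<pi>0)" using assms by simp
    then show ?thesis unfolding key_def by simp
  qed
  from fun_cong[OF this, of z] show "\<pi> z = \<pi>0 z" using z X by simp
qed

lemma fib_G:
  assumes "key \<pi> = key \<pi>0"
  shows "G \<pi> x y \<longleftrightarrow> G \<pi>0 x y"
  using G_transfer[of \<pi> \<pi>0] G_transfer[of \<pi>0 \<pi>] fib_props[OF assms] by metis

lemma perm_image_eq:
  assumes "\<pi> permutes {1..n}" "\<pi>0 permutes {1..n}" "X0 \<subseteq> {1..n}" "\<And>z. z \<notin> X0 \<Longrightarrow> \<pi> z = \<pi>0 z"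
  shows "\<pi> ` X0 = \<pi>0 ` X0"
proof -
  have e: "X0 = {1..n} - ({1..n} - X0)" using assms(3) by auto
  have c: "\<pi> ` ({1..n} - X0) = \<pi>0 ` ({1..n} - X0)" using assms(4) by (intro image_cong) auto
  have "\<pi> ` X0 = \<pi> ` {1..n} - \<pi> ` ({1..n} - X0)"
    by (subst e, rule image_set_diff[OF permutes_inj[OF assms(1)]])
  also have "\<dots> = \<pi>0 ` {1..n} - \<pi>0 ` ({1..n} - X0)"
    using c permutes_image[OF assms(1)] permutes_image[OF assms(2)] by simp
  also have "\<dots> = \<pi>0 ` ({1..n} - ({1..n} - X0))"
    by (rule image_set_diff[OF permutes_inj[OF assms(2)], symmetric])
  also have "\<dots> = \<pi>0 ` X0" using e by simp
  finally show ?thesis .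
qed

lemma Xs_sub: "Xs \<pi> \<subseteq> {1..n}" unfolding Xs_def by auto

lemma CA_iff:
  assumes "key \<pi> = key \<pi>0"
  shows "CA \<pi> \<longleftrightarrow> badA (Xs \<pi>0) (G \<pi>0) (restrict \<pi> (Xs \<pi>0))"
proof
  assume "CA \<pi>"
  then obtain j l where jl: "j + 2 \<le> l" "l \<le> n" "\<pi> l < \<pi> j" "G \<pi> j (\<pi> l)" unfolding CA_def by blast
  have "G \<pi> j (\<pi> j)" using G_monoy jl by fastforce
  moreover have "1 \<le> j" using G_pos jl(4) by blast
  ultimately have j: "j \<in> Xs \<pi>" unfolding Xs_def using jl by auto
  have "G \<pi> l (\<pi> l)" using G_monox jl by fastforce
  then have l: "l \<in> Xs \<pi>" unfolding Xs_def using jl \<open>1 \<le> j\<close> by auto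
  show "badA (Xs \<pi>0) (G \<pi>0) (restrict \<pi> (Xs \<pi>0))"
    unfolding badA_def using j l jl fib_props(1)[OF assms] fib_G[OF assms]
    by (intro bexI[of _ j] bexI[of _ l]) auto
next
  assume "badA (Xs \<pi>0) (G \<pi>0) (restrict \<pi> (Xs \<pi>0))"
  then obtain j l where jl: "j \<in> Xs \<pi>0" "l \<in> Xs \<pi>0" "j + 2 \<le> l" "\<pi> l < \<pi> j" "G \<pi>0 j (\<pi> l)"
    unfolding badA_def by auto
  then have "l \<le> n" using Xs_sub[of \<pi>0] by auto
  then show "CA \<pi>" unfolding CA_def using jl fib_G[OF assms] by blast
qed

lemma CB_iff:
  assumes "key \<pi> = key \<pi>0"
  shows "CB \<pi> \<longleftrightarrow> badB (Xs \<pi>0) (G \<pi>0) (restrict \<pi> (Xs \<pi>0))"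
proof
  assume "CB \<pi>"
  then obtain j l where jl: "j + 2 \<le> l" "l \<le> n" "\<pi> j < \<pi> l" "G \<pi> j (\<pi> j)" unfolding CB_def by blast
  have "1 \<le> j" using G_pos jl(4) by blast
  then have j: "j \<in> Xs \<pi>" unfolding Xs_def using jl by auto
  have "G \<pi> j (\<pi> l)" using G_monoy jl by fastforce
  then have "G \<pi> l (\<pi> l)" using G_monox jl by fastforce
  then have l: "l \<in> Xs \<pi>" unfolding Xs_def using jl \<open>1 \<le> j\<close> by auto
  show "badB (Xs \<pi>0) (G \<pi>0) (restrict \<pi> (Xs \<pi>0))"
    unfolding badB_def using j l jl fib_props(1)[OF assms] fib_G[OF assms]
    by (intro bexI[of _ j] bexI[of _ l]) auto
next
  assume "badB (Xs \<pi>0) (G \<pi>0) (restrict \<pi> (Xs \<pi>0))"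
  then obtain j l where jl: "j \<in> Xs \<pi>0" "l \<in> Xs \<pi>0" "j + 2 \<le> l" "\<pi> j < \<pi> l" "G \<pi>0 j (\<pi> j)"
    unfolding badB_def by auto
  then have "l \<le> n" using Xs_sub[of \<pi>0] by auto
  then show "CB \<pi>" unfolding CB_def using jl fib_G[OF assms] by blast
qed


lemma fiber_bij:
  assumes p0: "\<pi>0 permutes {1..n}"
  shows "bij_betw (\<lambda>\<pi>. restrict \<pi> (Xs \<pi>0)) {\<pi>\<in>{\<pi>. \<pi> permutes {1..n}}. key \<pi> = key \<pi>0}
           (board (Xs \<pi>0) (\<pi>0 ` Xs \<pi>0) (G \<pi>0))"
proof -
  let ?X0 = "Xs \<pi>0" and ?Y0 = "\<pi>0 ` Xs \<pi>0"
  let ?F = "{\<pi>\<in>{\<pi>. \<pi> permutes {1..n}}. key \<pi> = key \<pi>0}"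
  have X0sub: "?X0 \<subseteq> {1..n}" by (rule Xs_sub)
  have Y0sub: "?Y0 \<subseteq> {1..n}" using X0sub permutes_image[OF p0] by blast
  have inj: "inj_on (\<lambda>\<pi>. restrict \<pi> ?X0) ?F"
  proof (rule inj_onI)
    fix \<pi> \<pi>' assume a: "\<pi> \<in> ?F" "\<pi>' \<in> ?F" "restrict \<pi> ?X0 = restrict \<pi>' ?X0"
    show "\<pi> = \<pi>'"
    proof
      fix x show "\<pi> x = \<pi>' x"
      proof (cases "x \<in> ?X0")
        case True then show ?thesis using fun_cong[OF a(3), of x] by simp
      next
        case False then show ?thesis using fib_props(2)[of \<pi> \<pi>0] fib_props(2)[of \<pi>' \<pi>0] a by auto
      qed
    qed
  qed
  have sub: "(\<lambda>\<pi>. restrict \<pi> ?X0) ` ?F \<subseteq> board ?X0 ?Y0 (G \<pi>0)"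
  proof
    fix \<sigma> assume "\<sigma> \<in> (\<lambda>\<pi>. restrict \<pi> ?X0) ` ?F"
    then obtain \<pi> where \<pi>: "\<pi> permutes {1..n}" "key \<pi> = key \<pi>0" "\<sigma> = restrict \<pi> ?X0" by auto
    have out: "\<And>z. z \<notin> ?X0 \<Longrightarrow> \<pi> z = \<pi>0 z" using fib_props(2)[OF \<pi>(2)] by blast
    have img: "\<pi> ` ?X0 = ?Y0" using perm_image_eq[OF \<pi>(1) p0 X0sub out] .
    have bij: "bij_betw \<pi> ?X0 ?Y0"
      unfolding bij_betw_def using img inj_on_subset[OF permutes_inj[OF \<pi>(1)] subset_UNIV] by simp
    have "bij_betw \<sigma> ?X0 ?Y0 = bij_betw \<pi> ?X0 ?Y0" by (rule bij_betw_cong) (simp add: \<pi>(3))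
    with bij have b: "bij_betw \<sigma> ?X0 ?Y0" by simp
    have pie: "\<sigma> \<in> ?X0 \<rightarrow>\<^sub>E ?Y0" using img \<pi>(3) by auto
    have "\<forall>x\<in>?X0. G \<pi>0 x (\<sigma> x)"
    proof
      fix x assume x: "x \<in> ?X0"
      then have "x \<in> Xs \<pi>" using fib_props(1)[OF \<pi>(2)] by simp
      then have "G \<pi> x (\<pi> x)" unfolding Xs_def by simp
      then show "G \<pi>0 x (\<sigma> x)" using fib_G[OF \<pi>(2)] x \<pi>(3) by simp
    qed
    then show "\<sigma> \<in> board ?X0 ?Y0 (G \<pi>0)" using b pie unfolding board_def by simp
  qed
  have sup: "board ?X0 ?Y0 (G \<pi>0) \<subseteq> (\<lambda>\<pi>. restrict \<pi> ?X0) ` ?F"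
  proof
    fix \<sigma> assume s: "\<sigma> \<in> board ?X0 ?Y0 (G \<pi>0)"
    define \<pi> where "\<pi> = (\<lambda>x. if x \<in> ?X0 then \<sigma> x else \<pi>0 x)"
    have b1: "bij_betw \<pi> ?X0 ?Y0"
    proof -
      have "bij_betw \<pi> ?X0 ?Y0 = bij_betw \<sigma> ?X0 ?Y0" by (rule bij_betw_cong) (simp add: \<pi>_def)
      then show ?thesis using board_D(2)[OF s] by simp
    qed
    have b2: "bij_betw \<pi> ({1..n} - ?X0) ({1..n} - ?Y0)"
    proof -
      have i: "\<pi>0 ` ({1..n} - ?X0) = {1..n} - ?Y0"
        using image_set_diff[OF permutes_inj[OF p0]] permutes_image[OF p0] by metis
      have "bij_betw \<pi>0 ({1..n} - ?X0) ({1..n} - ?Y0)"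
        unfolding bij_betw_def using i inj_on_subset[OF permutes_inj[OF p0] subset_UNIV] by simp
      moreover have "bij_betw \<pi> ({1..n} - ?X0) ({1..n} - ?Y0) = bij_betw \<pi>0 ({1..n} - ?X0) ({1..n} - ?Y0)"
        by (rule bij_betw_cong) (simp add: \<pi>_def)
      ultimately show ?thesis by simp
    qed
    have "bij_betw \<pi> (?X0 \<union> ({1..n} - ?X0)) (?Y0 \<union> ({1..n} - ?Y0))"
      by (rule bij_betw_combine[OF b1 b2]) auto
    moreover have "?X0 \<union> ({1..n} - ?X0) = {1..n}" "?Y0 \<union> ({1..n} - ?Y0) = {1..n}"
      using X0sub Y0sub by auto
    ultimately have bn: "bij_betw \<pi> {1..n} {1..n}" by simp
    have pp: "\<pi> permutes {1..n}"
    proof (rule bij_imp_permutes[OF bn])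
      fix x assume "x \<notin> {1..n}"
      then show "\<pi> x = x" using X0sub permutes_not_in[OF p0] unfolding \<pi>_def by auto
    qed
    have out: "\<forall>z. z \<notin> Xs \<pi>0 \<longrightarrow> \<pi> z = \<pi>0 z" unfolding \<pi>_def by simp
    have ins: "\<forall>z\<in>Xs \<pi>0. G \<pi>0 z (\<pi> z)" using board_D(3)[OF s] unfolding \<pi>_def by simp
    have XsE: "Xs \<pi> = ?X0"
    proof -
      have "Xs \<pi> = {x\<in>{1..n}. G \<pi>0 x (\<pi> x)}" unfolding Xs_def using G_merge[OF out ins] by simp
      also have "\<dots> = ?X0"
      proof (intro equalityI subsetI)
        fix x assume x: "x \<in> {x\<in>{1..n}. G \<pi>0 x (\<pi> x)}"
        show "x \<in> ?X0"
        proof (rule ccontr)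
          assume "x \<notin> ?X0"
          then have "\<pi> x = \<pi>0 x" unfolding \<pi>_def by simp
          then show False using x \<open>x \<notin> ?X0\<close> unfolding Xs_def by simp
        qed
      next
        fix x assume x: "x \<in> ?X0"
        then show "x \<in> {x\<in>{1..n}. G \<pi>0 x (\<pi> x)}" using X0sub ins by auto
      qed
      finally show ?thesis .
    qed
    have kk: "key \<pi> = key \<pi>0" unfolding key_def XsE using out by auto
    have "restrict \<pi> ?X0 = \<sigma>"
    proof
      fix x show "restrict \<pi> ?X0 x = \<sigma> x"
        using board_D(1)[OF s] unfolding \<pi>_def by (auto simp: PiE_def extensional_def)
    qed
    then show "\<sigma> \<in> (\<lambda>\<pi>. restrict \<pi> ?X0) ` ?F" using pp kk by force
  qed
  show ?thesis unfolding bij_betw_def using inj sub sup by blast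
qed

lemma fiber_cardA:
  assumes p0: "\<pi>0 permutes {1..n}"
  shows "card {\<pi>\<in>{\<pi>. \<pi> permutes {1..n}}. key \<pi> = key \<pi>0 \<and> \<not> CA \<pi>} =
         card {\<sigma>\<in>board (Xs \<pi>0) (\<pi>0 ` Xs \<pi>0) (G \<pi>0). \<not> badA (Xs \<pi>0) (G \<pi>0) \<sigma>}"
proof -
  let ?f = "\<lambda>\<pi>. restrict \<pi> (Xs \<pi>0)"
  let ?F = "{\<pi>\<in>{\<pi>. \<pi> permutes {1..n}}. key \<pi> = key \<pi>0}"
  have bb: "bij_betw ?f ?F (board (Xs \<pi>0) (\<pi>0 ` Xs \<pi>0) (G \<pi>0))" by (rule fiber_bij[OF p0])
  have e: "{\<pi>\<in>{\<pi>. \<pi> permutes {1..n}}. key \<pi> = key \<pi>0 \<and> \<not> CA \<pi>} = {\<pi>\<in>?F. \<not> badA (Xs \<pi>0) (G \<pi>0) (?f \<pi>)}"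
    using CA_iff[of _ \<pi>0] by blast
  have ii: "inj_on ?f ?F" using bij_betw_imp_inj_on[OF bb] .
  have "card {\<pi>\<in>?F. \<not> badA (Xs \<pi>0) (G \<pi>0) (?f \<pi>)} = card (?f ` {\<pi>\<in>?F. \<not> badA (Xs \<pi>0) (G \<pi>0) (?f \<pi>)})"
    by (rule card_image[symmetric], rule inj_on_subset[OF ii]) blast
  also have "?f ` {\<pi>\<in>?F. \<not> badA (Xs \<pi>0) (G \<pi>0) (?f \<pi>)} = {\<sigma>\<in>?f ` ?F. \<not> badA (Xs \<pi>0) (G \<pi>0) \<sigma>}"
    by blast
  also have "\<dots> = {\<sigma>\<in>board (Xs \<pi>0) (\<pi>0 ` Xs \<pi>0) (G \<pi>0). \<not> badA (Xs \<pi>0) (G \<pi>0) \<sigma>}"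
    using bij_betw_imp_surj_on[OF bb] by simp
  finally have calc: "card {\<pi>\<in>?F. \<not> badA (Xs \<pi>0) (G \<pi>0) (?f \<pi>)} = card {\<sigma>\<in>board (Xs \<pi>0) (\<pi>0 ` Xs \<pi>0) (G \<pi>0). \<not> badA (Xs \<pi>0) (G \<pi>0) \<sigma>}" .
  show ?thesis unfolding e by (rule calc)
qed

lemma fiber_cardB:
  assumes p0: "\<pi>0 permutes {1..n}"
  shows "card {\<pi>\<in>{\<pi>. \<pi> permutes {1..n}}. key \<pi> = key \<pi>0 \<and> \<not> CB \<pi>} =
         card {\<sigma>\<in>board (Xs \<pi>0) (\<pi>0 ` Xs \<pi>0) (G \<pi>0). \<not> badB (Xs \<pi>0) (G \<pi>0) \<sigma>}"
proof -
  let ?f = "\<lambda>\<pi>. restrict \<pi> (Xs \<pi>0)"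
  let ?F = "{\<pi>\<in>{\<pi>. \<pi> permutes {1..n}}. key \<pi> = key \<pi>0}"
  have bb: "bij_betw ?f ?F (board (Xs \<pi>0) (\<pi>0 ` Xs \<pi>0) (G \<pi>0))" by (rule fiber_bij[OF p0])
  have e: "{\<pi>\<in>{\<pi>. \<pi> permutes {1..n}}. key \<pi> = key \<pi>0 \<and> \<not> CB \<pi>} = {\<pi>\<in>?F. \<not> badB (Xs \<pi>0) (G \<pi>0) (?f \<pi>)}"
    using CB_iff[of _ \<pi>0] by blast
  have ii: "inj_on ?f ?F" using bij_betw_imp_inj_on[OF bb] .
  have "card {\<pi>\<in>?F. \<not> badB (Xs \<pi>0) (G \<pi>0) (?f \<pi>)} = card (?f ` {\<pi>\<in>?F. \<not> badB (Xs \<pi>0) (G \<pi>0) (?f \<pi>)})"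
    by (rule card_image[symmetric], rule inj_on_subset[OF ii]) blast
  also have "?f ` {\<pi>\<in>?F. \<not> badB (Xs \<pi>0) (G \<pi>0) (?f \<pi>)} = {\<sigma>\<in>?f ` ?F. \<not> badB (Xs \<pi>0) (G \<pi>0) \<sigma>}"
    by blast
  also have "\<dots> = {\<sigma>\<in>board (Xs \<pi>0) (\<pi>0 ` Xs \<pi>0) (G \<pi>0). \<not> badB (Xs \<pi>0) (G \<pi>0) \<sigma>}"
    using bij_betw_imp_surj_on[OF bb] by simp
  finally have calc: "card {\<pi>\<in>?F. \<not> badB (Xs \<pi>0) (G \<pi>0) (?f \<pi>)} = card {\<sigma>\<in>board (Xs \<pi>0) (\<pi>0 ` Xs \<pi>0) (G \<pi>0). \<not> badB (Xs \<pi>0) (G \<pi>0) \<sigma>}" .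
  show ?thesis unfolding e by (rule calc)
qed

theorem main_eq:
  "card {\<pi>\<in>{\<pi>. \<pi> permutes {1..n}}. \<not> CA \<pi>} = card {\<pi>\<in>{\<pi>. \<pi> permutes {1..n}}. \<not> CB \<pi>}"
proof -
  let ?S = "{\<pi>. \<pi> permutes {1..n}}"
  have fS: "finite ?S" by (rule finite_permutations) simp
  have "card {\<pi>\<in>?S. \<not> CA \<pi>} = (\<Sum>\<kappa>\<in>key ` ?S. card {\<pi>\<in>?S. key \<pi> = \<kappa> \<and> \<not> CA \<pi>})"
    by (rule card_fibers[OF fS])
  also have "\<dots> = (\<Sum>\<kappa>\<in>key ` ?S. card {\<pi>\<in>?S. key \<pi> = \<kappa> \<and> \<not> CB \<pi>})"
  proof (rule sum.cong[OF refl])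
    fix \<kappa> assume "\<kappa> \<in> key ` ?S"
    then obtain \<pi>0 where p0: "\<pi>0 permutes {1..n}" and \<kappa>: "\<kappa> = key \<pi>0" by auto
    have fX: "finite (Xs \<pi>0)" using Xs_sub finite_subset by blast
    have cY: "card (\<pi>0 ` Xs \<pi>0) = card (Xs \<pi>0)"
      by (intro card_image inj_on_subset[OF permutes_inj[OF p0] subset_UNIV])
    have "card {\<sigma>\<in>board (Xs \<pi>0) (\<pi>0 ` Xs \<pi>0) (G \<pi>0). \<not> badA (Xs \<pi>0) (G \<pi>0) \<sigma>} =
          card {\<sigma>\<in>board (Xs \<pi>0) (\<pi>0 ` Xs \<pi>0) (G \<pi>0). \<not> badB (Xs \<pi>0) (G \<pi>0) \<sigma>}"
    proof (rule board_eq[where g="G \<pi>0"])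
      show "\<And>x x' y. G \<pi>0 x y \<Longrightarrow> x \<le> x' \<Longrightarrow> G \<pi>0 x' y" by (rule G_monox)
      show "\<And>x y y'. G \<pi>0 x y \<Longrightarrow> y \<le> y' \<Longrightarrow> G \<pi>0 x y'" by (rule G_monoy)
      show "finite (Xs \<pi>0)" "finite (\<pi>0 ` Xs \<pi>0)" "finite (\<pi>0 ` Xs \<pi>0)" using fX by auto
      show "card (\<pi>0 ` Xs \<pi>0) = card (Xs \<pi>0)" "card (\<pi>0 ` Xs \<pi>0) = card (Xs \<pi>0)" using cY by auto
      show "\<And>x y. x \<in> Xs \<pi>0 \<Longrightarrow> Suc x \<in> Xs \<pi>0 \<Longrightarrow> G \<pi>0 (Suc x) y \<Longrightarrow> G \<pi>0 x y"
        by (rule G_adj)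
      show "\<forall>x\<in>Xs \<pi>0. card {y \<in> \<pi>0 ` Xs \<pi>0. G \<pi>0 x y} = card {y \<in> \<pi>0 ` Xs \<pi>0. G \<pi>0 x y}" by simp
    qed
    then show "card {\<pi>\<in>?S. key \<pi> = \<kappa> \<and> \<not> CA \<pi>} = card {\<pi>\<in>?S. key \<pi> = \<kappa> \<and> \<not> CB \<pi>}"
      using fiber_cardA[OF p0] fiber_cardB[OF p0] \<kappa> by simp
  qed
  also have "\<dots> = card {\<pi>\<in>?S. \<not> CB \<pi>}"
    by (rule card_fibers[OF fS, symmetric])
  finally show ?thesis .
qed


lemma occ_mono: assumes "occ \<pi> W" "i \<in> {1..k-3}" shows "W i \<le> W (k-3)"
proof -
  have l: "k-3 \<in> {1..k-3}" using k4 by simp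
  have sm: "strict_mono_on {1..k-3} W" using assms(1) unfolding occ_def by simp
  show ?thesis
  proof (cases "i = k-3")
    case True then show ?thesis by simp
  next
    case False
    then have "i < k-3" using assms(2) by simp
    then show ?thesis using strict_mono_onD[OF sm assms(2) l] by simp
  qed
qed

lemma build_idx:
  assumes W: "occ \<pi> W" and jl: "W (k-3) < j" "j + 2 \<le> l" "l \<le> n"
    and idx_def: "idx = (\<lambda>i. if i \<le> k-3 then W i else if i = k-2 then j else if i = k-1 then Suc j else l)"
  shows "strict_mono_on {1..k} idx" "idx ` {1..k} \<subseteq> {1..n}"
    "\<And>i. i \<in> {1..k-3} \<Longrightarrow> idx i = W i" "idx (k-2) = j" "idx k = l"
proof -
  have sm: "strict_mono_on {1..k-3} W" and im: "W ` {1..k-3} \<subseteq> {1..n}" using W unfolding occ_def by auto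
  show "strict_mono_on {1..k} idx"
  proof (rule strict_mono_onI)
    fix r s assume rs: "r \<in> {1..k}" "s \<in> {1..k}" "r < s"
    show "idx r < idx s"
    proof (cases "s \<le> k-3")
      case True
      then show ?thesis using strict_mono_onD[OF sm, of r s] rs unfolding idx_def by auto
    next
      case s: False
      show ?thesis
      proof (cases "r \<le> k-3")
        case True
        then have "W r \<le> W (k-3)" using occ_mono[OF W, of r] rs by auto
        then show ?thesis using s True jl k4 unfolding idx_def by auto
      next
        case False
        then show ?thesis using s rs jl k4 unfolding idx_def by auto
      qed
    qed
  qed
  have "k-3 \<in> {1..k-3}" using k4 by simp
  then have W1: "1 \<le> W (k-3)" using im by (auto simp: image_subset_iff)
  show "idx ` {1..k} \<subseteq> {1..n}"
  proof
    fix y assume "y \<in> idx ` {1..k}"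
    then obtain i where i: "i \<in> {1..k}" "y = idx i" by auto
    show "y \<in> {1..n}"
    proof (cases "i \<le> k-3")
      case True
      then have "i \<in> {1..k-3}" using i by auto
      then have "W i \<in> {1..n}" using im by blast
      then show ?thesis using True i unfolding idx_def by simp
    next
      case False then show ?thesis using i jl W1 unfolding idx_def by auto
    qed
  qed
  show "\<And>i. i \<in> {1..k-3} \<Longrightarrow> idx i = W i" unfolding idx_def by simp
  show "idx (k-2) = j" "idx k = l" using k4 unfolding idx_def by auto
qed

lemma restrict_occ:
  assumes sm: "strict_mono_on {1..k} idx" and im: "idx ` {1..k} \<subseteq> {1..n}"
    and rel: "\<forall>a\<in>A. \<forall>b\<in>A. pop_less R a b \<longrightarrow> \<pi> (idx a) < \<pi> (idx b)"
  shows "occ \<pi> idx" "idx (k-3) < idx (k-2)" "idx (k-2) + 2 \<le> idx k" "idx k \<le> n"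
proof -
  have "strict_mono_on {1..k-3} idx"
  proof (rule strict_mono_onI)
    fix r s assume "r \<in> {1..k-3}" "s \<in> {1..k-3}" "r < s"
    then show "idx r < idx s" using strict_mono_onD[OF sm, of r s] by auto
  qed
  moreover have "idx ` {1..k-3} \<subseteq> {1..n}"
  proof -
    have "{1..k-3} \<subseteq> {1..k}" by (rule atLeastatMost_subset_iff[THEN iffD2]) auto
    then show ?thesis using im by (meson image_mono subset_trans)
  qed
  ultimately show "occ \<pi> idx" using rel unfolding occ_def by simp
  have a: "k-3 \<in> {1..k}" "k-2 \<in> {1..k}" "k-1 \<in> {1..k}" "k \<in> {1..k}" using k4 by auto
  show "idx (k-3) < idx (k-2)" using strict_mono_onD[OF sm a(1) a(2)] k4 by simp
  have "idx (k-2) < idx (k-1)" "idx (k-1) < idx k"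
    using strict_mono_onD[OF sm a(2) a(3)] strict_mono_onD[OF sm a(3) a(4)] k4 by auto
  then show "idx (k-2) + 2 \<le> idx k" by simp
  have "idx k \<in> {1..n}" using im a(4) by blast
  then show "idx k \<le> n" by simp
qed

lemma contains_CA:
  assumes charp: "\<And>u v. pop_less R u v \<Longrightarrow> (u\<in>A \<and> v\<in>A) \<or> (u\<in>A \<and> v = k-2) \<or> (u\<in>A \<and> v = k) \<or> (u = k \<and> v = k-2)"
    and lt1: "\<forall>a\<in>A. pop_less R a (k-2) \<and> pop_less R a k" and lt2: "pop_less R k (k-2)"
  shows "contains \<pi> n k R \<longleftrightarrow> CA \<pi>"
proof
  assume "contains \<pi> n k R"
  then obtain idx where sm: "strict_mono_on {1..k} idx" and im: "idx ` {1..k} \<subseteq> {1..n}"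
    and rel: "\<forall>j\<in>{1..k}. \<forall>m\<in>{1..k}. pop_less R j m \<longrightarrow> \<pi> (idx j) < \<pi> (idx m)"
    unfolding contains_def by blast
  have Ak: "A \<subseteq> {1..k}"
  proof
    fix a assume "a \<in> A" then have "a \<in> {1..k-3}" using Asub by blast
    then show "a \<in> {1..k}" by auto
  qed
  have kk: "k \<in> {1..k}" "k-2 \<in> {1..k}" using k4 by auto
  have rA: "\<forall>a\<in>A. \<forall>b\<in>A. pop_less R a b \<longrightarrow> \<pi> (idx a) < \<pi> (idx b)"
  proof (intro ballI impI)
    fix a b assume ab: "a \<in> A" "b \<in> A" "pop_less R a b"
    have "a \<in> {1..k}" "b \<in> {1..k}" using ab Ak by blast+
    then show "\<pi> (idx a) < \<pi> (idx b)" using rel ab(3) by blast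
  qed
  note r = restrict_occ[OF sm im rA]
  have lt: "\<pi> (idx k) < \<pi> (idx (k-2))" using rel kk lt2 by blast
  have la: "\<forall>a\<in>A. \<pi> (idx a) < \<pi> (idx k)"
  proof
    fix a assume a: "a \<in> A"
    then have "a \<in> {1..k}" using Ak by blast
    moreover have "pop_less R a k" using lt1 a by blast
    ultimately show "\<pi> (idx a) < \<pi> (idx k)" using rel kk(1) by blast
  qed
  have "G \<pi> (idx (k-2)) (\<pi> (idx k))" unfolding G_def
    by (rule exI[of _ idx]) (use r(1,2) la in simp)
  then show "CA \<pi>" unfolding CA_def
    by (intro exI[of _ "idx (k-2)"] exI[of _ "idx k"]) (use r(3,4) lt in simp)
next
  assume "CA \<pi>"
  then obtain j l W where jl: "j + 2 \<le> l" "l \<le> n" "\<pi> l < \<pi> j" and W: "occ \<pi> W" "W (k-3) < j"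
    "\<forall>a\<in>A. \<pi> (W a) < \<pi> l" unfolding CA_def G_def by blast
  define idx where "idx = (\<lambda>i. if i \<le> k-3 then W i else if i = k-2 then j else if i = k-1 then Suc j else l)"
  note b = build_idx[OF W(1,2) jl(1,2) idx_def]
  have Aeq: "idx a = W a" if a: "a \<in> A" for a
  proof -
    have "a \<in> {1..k-3}" using Asub a by (rule subsetD)
    then show ?thesis using b(3) by blast
  qed
  show "contains \<pi> n k R" unfolding contains_def
  proof (intro exI[of _ idx] conjI ballI impI)
    show "strict_mono_on {1..k} idx" by (rule b(1))
    show "idx ` {1..k} \<subseteq> {1..n}" by (rule b(2))
    fix u v assume uv: "u \<in> {1..k}" "v \<in> {1..k}" "pop_less R u v"
    from charp[OF uv(3)] show "\<pi> (idx u) < \<pi> (idx v)"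
    proof (elim disjE conjE)
      assume uA: "u \<in> A" "v \<in> A"
      then have "\<pi> (W u) < \<pi> (W v)" using W(1) uv(3) unfolding occ_def by blast
      then show ?thesis using Aeq uA by simp
    next
      assume uA: "u \<in> A" "v = k-2"
      then have "\<pi> (W u) < \<pi> l" using W(3) by blast
      then show ?thesis using Aeq uA b(4) jl(3) by simp
    next
      assume uA: "u \<in> A" "v = k"
      then have "\<pi> (W u) < \<pi> l" using W(3) by blast
      then show ?thesis using Aeq uA b(5) by simp
    next
      assume "u = k" "v = k-2"
      then show ?thesis using b(4,5) jl(3) by simp
    qed
  qed
qed

lemma contains_CB:
  assumes charp: "\<And>u v. pop_less R' u v \<Longrightarrow> (u\<in>A \<and> v\<in>A) \<or> (u\<in>A \<and> v = k-2) \<or> (u\<in>A \<and> v = k) \<or> (u = k-2 \<and> v = k)"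
    and lt1: "\<forall>a\<in>A. pop_less R' a (k-2) \<and> pop_less R' a k" and lt2: "pop_less R' (k-2) k"
    and agree: "\<forall>a\<in>A. \<forall>b\<in>A. pop_less R' a b = pop_less R a b"
  shows "contains \<pi> n k R' \<longleftrightarrow> CB \<pi>"
proof
  assume "contains \<pi> n k R'"
  then obtain idx where sm: "strict_mono_on {1..k} idx" and im: "idx ` {1..k} \<subseteq> {1..n}"
    and rel: "\<forall>j\<in>{1..k}. \<forall>m\<in>{1..k}. pop_less R' j m \<longrightarrow> \<pi> (idx j) < \<pi> (idx m)"
    unfolding contains_def by blast
  have Ak: "A \<subseteq> {1..k}"
  proof
    fix a assume "a \<in> A" then have "a \<in> {1..k-3}" using Asub by blast
    then show "a \<in> {1..k}" by auto
  qed
  have kk: "k \<in> {1..k}" "k-2 \<in> {1..k}" using k4 by auto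
  have rA: "\<forall>a\<in>A. \<forall>b\<in>A. pop_less R a b \<longrightarrow> \<pi> (idx a) < \<pi> (idx b)"
  proof (intro ballI impI)
    fix a b assume ab: "a \<in> A" "b \<in> A" "pop_less R a b"
    have "a \<in> {1..k}" "b \<in> {1..k}" using ab Ak by blast+
    moreover have "pop_less R' a b" using agree ab by blast
    ultimately show "\<pi> (idx a) < \<pi> (idx b)" using rel by blast
  qed
  note r = restrict_occ[OF sm im rA]
  have lt: "\<pi> (idx (k-2)) < \<pi> (idx k)" using rel kk lt2 by blast
  have la: "\<forall>a\<in>A. \<pi> (idx a) < \<pi> (idx (k-2))"
  proof
    fix a assume a: "a \<in> A"
    then have "a \<in> {1..k}" using Ak by blast
    moreover have "pop_less R' a (k-2)" using lt1 a by blast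
    ultimately show "\<pi> (idx a) < \<pi> (idx (k-2))" using rel kk(2) by blast
  qed
  have "G \<pi> (idx (k-2)) (\<pi> (idx (k-2)))" unfolding G_def
    by (rule exI[of _ idx]) (use r(1,2) la in simp)
  then show "CB \<pi>" unfolding CB_def
    by (intro exI[of _ "idx (k-2)"] exI[of _ "idx k"]) (use r(3,4) lt in simp)
next
  assume "CB \<pi>"
  then obtain j l W where jl: "j + 2 \<le> l" "l \<le> n" "\<pi> j < \<pi> l" and W: "occ \<pi> W" "W (k-3) < j"
    "\<forall>a\<in>A. \<pi> (W a) < \<pi> j" unfolding CB_def G_def by blast
  define idx where "idx = (\<lambda>i. if i \<le> k-3 then W i else if i = k-2 then j else if i = k-1 then Suc j else l)"
  note b = build_idx[OF W(1,2) jl(1,2) idx_def]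
  have Aeq: "idx a = W a" if a: "a \<in> A" for a
  proof -
    have "a \<in> {1..k-3}" using Asub a by (rule subsetD)
    then show ?thesis using b(3) by blast
  qed
  show "contains \<pi> n k R'" unfolding contains_def
  proof (intro exI[of _ idx] conjI ballI impI)
    show "strict_mono_on {1..k} idx" by (rule b(1))
    show "idx ` {1..k} \<subseteq> {1..n}" by (rule b(2))
    fix u v assume uv: "u \<in> {1..k}" "v \<in> {1..k}" "pop_less R' u v"
    from charp[OF uv(3)] show "\<pi> (idx u) < \<pi> (idx v)"
    proof (elim disjE conjE)
      assume uA: "u \<in> A" "v \<in> A"
      then have "pop_less R u v" using agree uv(3) by blast
      then have "\<pi> (W u) < \<pi> (W v)" using W(1) uA unfolding occ_def by blast
      then show ?thesis using Aeq uA by simp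
    next
      assume uA: "u \<in> A" "v = k-2"
      then have "\<pi> (W u) < \<pi> j" using W(3) by blast
      then show ?thesis using Aeq uA b(4) by simp
    next
      assume uA: "u \<in> A" "v = k"
      then have "\<pi> (W u) < \<pi> j" using W(3) by blast
      then show ?thesis using Aeq uA b(4,5) jl(3) by simp
    next
      assume "u = k-2" "v = k"
      then show ?thesis using b(4,5) jl(3) by simp
    qed
  qed
qed

end


lemma pop_facts:
  assumes "pop k r" "pop_less r u v"
  shows "u \<in> {1..k}" "v \<in> {1..k}" "u \<noteq> v" "\<not> pop_less r v u"
proof -
  have sub: "r \<subseteq> {1..k} \<times> {1..k}" and po: "partial_order_on {1..k} r" using assms(1) unfolding pop_def by auto
  have uv: "(u, v) \<in> r" "u \<noteq> v" using assms(2) unfolding pop_less_def by auto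
  show "u \<in> {1..k}" "v \<in> {1..k}" using sub uv by auto
  show "u \<noteq> v" by (rule uv(2))
  have "antisym r" using po unfolding partial_order_on_def by simp
  then show "\<not> pop_less r v u" using uv unfolding pop_less_def antisym_def by blast
qed

lemma iso_facts:
  assumes "isolated k r = I" "pop k r" "pop_less r u v"
  shows "u \<notin> I" "v \<notin> I"
proof -
  have uk: "u \<in> {1..k}" "v \<in> {1..k}" "u \<noteq> v" using pop_facts[OF assms(2,3)] by auto
  show "u \<notin> I"
  proof
    assume "u \<in> I"
    then have "\<forall>w\<in>{1..k}. w \<noteq> u \<longrightarrow> \<not> pop_less r w u \<and> \<not> pop_less r u w"
      using assms(1) unfolding isolated_def by auto
    then show False using uk assms(3) by auto
  qed
  show "v \<notin> I"
  proof
    assume "v \<in> I"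
    then have "\<forall>w\<in>{1..k}. w \<noteq> v \<longrightarrow> \<not> pop_less r w v \<and> \<not> pop_less r v w"
      using assms(1) unfolding isolated_def by auto
    then show False using uk assms(3) by auto
  qed
qed

theorem theorem1p3:
  fixes k :: nat and p p' :: "(nat \<times> nat) set" and I :: "nat set"
  assumes "k \<ge> 4"
    and "pop k p" and "pop k p'"
    and "isolated k p = I" and "isolated k p' = I"
    and "k - 1 \<in> I" and "k - 3 \<notin> I" and "k - 2 \<notin> I" and "k \<notin> I"
    and "\<forall>x \<in> {1..k-3} - I. pop_less p x (k - 2) \<and> pop_less p x k"
    and "\<forall>x \<in> {1..k-3} - I. pop_less p' x (k - 2) \<and> pop_less p' x k"
    and "p \<inter> (({1..k-3} - I) \<times> ({1..k-3} - I)) = p' \<inter> (({1..k-3} - I) \<times> ({1..k-3} - I))"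
    and "pop_less p k (k - 2)" and "pop_less p' (k - 2) k"
  shows "wilf_equiv k p p'"
proof -
  define A where "A = {1..k-3} - I"
  have k4: "4 \<le> k" using assms(1) by simp
  have Asub: "A \<subseteq> {1..k-3}" by (auto simp: A_def)
  have Alast: "k-3 \<in> A" using k4 assms(7) by (auto simp: A_def)
  have lt1: "\<forall>a\<in>A. pop_less p a (k-2) \<and> pop_less p a k" using assms(10) unfolding A_def .
  have lt1': "\<forall>a\<in>A. pop_less p' a (k-2) \<and> pop_less p' a k" using assms(11) unfolding A_def .
  have rest: "u \<in> A \<or> u = k-2 \<or> u = k" if "u \<in> {1..k}" "u \<notin> I" for u
  proof (cases "u \<le> k-3")
    case True then show ?thesis using that unfolding A_def by auto
  next
    case False
    then have "u = k-2 \<or> u = k-1 \<or> u = k" using that(1) k4 by auto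
    then show ?thesis using that(2) assms(6) by auto
  qed
  have k2A: "k-2 \<notin> A" "k \<notin> A" using k4 unfolding A_def by auto
  have charp: "(u\<in>A \<and> v\<in>A) \<or> (u\<in>A \<and> v = k-2) \<or> (u\<in>A \<and> v = k) \<or> (u = k \<and> v = k-2)"
    if uv: "pop_less p u v" for u v
  proof -
    note f = pop_facts[OF assms(2) uv] and g = iso_facts[OF assms(4,2) uv]
    have cu: "u \<in> A \<or> u = k-2 \<or> u = k" using rest f(1) g(1) by blast
    have cv: "v \<in> A \<or> v = k-2 \<or> v = k" using rest f(2) g(2) by blast
    have n1: "\<not> (u = k-2 \<and> v \<in> A)" using f(4) lt1 by blast
    have n2: "\<not> (u = k \<and> v \<in> A)" using f(4) lt1 by blast
    have n3: "\<not> (u = k-2 \<and> v = k)" using f(4) assms(13) by blast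
    show ?thesis using cu cv n1 n2 n3 f(3) by blast
  qed
  have charp': "(u\<in>A \<and> v\<in>A) \<or> (u\<in>A \<and> v = k-2) \<or> (u\<in>A \<and> v = k) \<or> (u = k-2 \<and> v = k)"
    if uv: "pop_less p' u v" for u v
  proof -
    note f = pop_facts[OF assms(3) uv] and g = iso_facts[OF assms(5,3) uv]
    have cu: "u \<in> A \<or> u = k-2 \<or> u = k" using rest f(1) g(1) by blast
    have cv: "v \<in> A \<or> v = k-2 \<or> v = k" using rest f(2) g(2) by blast
    have n1: "\<not> (u = k-2 \<and> v \<in> A)" using f(4) lt1' by blast
    have n2: "\<not> (u = k \<and> v \<in> A)" using f(4) lt1' by blast
    have n3: "\<not> (u = k \<and> v = k-2)" using f(4) assms(14) by blast
    show ?thesis using cu cv n1 n2 n3 f(3) by blast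
  qed
  have agree: "\<forall>a\<in>A. \<forall>b\<in>A. pop_less p' a b = pop_less p a b"
  proof (intro ballI)
    fix a b assume ab: "a \<in> A" "b \<in> A"
    have "(a, b) \<in> p \<longleftrightarrow> (a, b) \<in> p'"
      using assms(12) ab unfolding A_def by blast
    then show "pop_less p' a b = pop_less p a b" unfolding pop_less_def by simp
  qed
  show ?thesis unfolding wilf_equiv_def
  proof (intro allI impI)
    fix n :: nat assume "1 \<le> n"
    interpret P: pfx n k A p using k4 Asub Alast by unfold_locales
    have e1: "avoiders n k p = {\<pi>\<in>{\<pi>. \<pi> permutes {1..n}}. \<not> P.CA \<pi>}"
      unfolding avoiders_def using P.contains_CA[OF charp lt1 assms(13)] by auto
    have e2: "avoiders n k p' = {\<pi>\<in>{\<pi>. \<pi> permutes {1..n}}. \<not> P.CB \<pi>}"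
      unfolding avoiders_def using P.contains_CB[OF charp' lt1' assms(14) agree] by auto
    show "card (avoiders n k p) = card (avoiders n k p')" unfolding e1 e2 by (rule P.main_eq)
  qed
qed

end
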